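(* For all nonnegative integers $k,l$, \[ \sum_{n=0}^\infty \frac{Q_l(H_n,H_n^{(2)},\dots,H_n^{(l)})\,P_k(H_n,H_n^{(2)},\dots,H_n^{(k)})}{(n+1)(n+2)} =\begin{cases} \displaystyle\sum_{j=0}^k\binom{k+l-j}{k+1-j}\zeta(k+l-j)-\zeta(l), & l\ge 2,\\[2ex] \displaystyle\sum_{j=0}^{k-1}\zeta(k+1-j)+1, & l=1,\\[2ex] 1, & l=0. \end{cases} \]
   Context: For integers $r\ge1$ and $n\ge0$, $H_n^{(r)}=\sum_{j=1}^n j^{-r}$ (so $H_0^{(r)}=0$), and $H_n=H_n^{(1)}$. The polynomials $P_n,Q_n\in\mathbb{Q}[y_1,\dots,y_n]$ are defined by $P_0=Q_0=1$ and, for $n\ge1$, $P_n(y_1,\dots,y_n)=\sum_{m_1+2m_2+3m_3+\cdots=n}\frac{(-1)^{m_2+m_4+\cdots}}{m_1!m_2!\cdots}\prod_{i\ge1}\left(\frac{y_i}{i}\right)^{m_i}$ and $Q_n(y_1,\dots,y_n)=\sum_{m_1+2m_2+\cdots=n}\frac{1}{m_1!m_2!\cdots}\prod_{i\ge1}\left(\frac{y_i}{i}\right)^{m_i}$, the sums over tuples of nonnegative integers $(m_1,m_2,\dots)$. (Equivalently, $P_n(p_1,\dots,p_n)=e_n$ and $Q_n(p_1,\dots,p_n)=h_n$, where $p_i,e_i,h_i$ are the power-sum, elementary and complete symmetric functions.) $\zeta$ is the Riemann zeta function. *)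

theory Defs
  imports "HOL-Analysis.Analysis"
begin

definition hnum :: "nat \<Rightarrow> nat \<Rightarrow> real" where
  "hnum r n = (\<Sum>j=1..n. 1 / (real j) ^ r)"

text \<open>Necessarily each m_i is at most n, and m_i = 0 for i > n.\<close>
definition part_tuples :: "nat \<Rightarrow> (nat \<Rightarrow> nat) set" where
  "part_tuples n = {m \<in> PiE {1..n} (\<lambda>_. {0..n}). (\<Sum>i=1..n. i * m i) = n}"

definition Ppoly :: "nat \<Rightarrow> (nat \<Rightarrow> real) \<Rightarrow> real" where
  "Ppoly n y = (\<Sum>m\<in>part_tuples n.
      (-1) ^ (\<Sum>i\<in>{i\<in>{1..n}. even i}. m i) *
      (\<Prod>i=1..n. (y i / real i) ^ m i / fact (m i)))"

definition Qpoly :: "nat \<Rightarrow> (nat \<Rightarrow> real) \<Rightarrow> real" where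
  "Qpoly n y = (\<Sum>m\<in>part_tuples n.
      (\<Prod>i=1..n. (y i / real i) ^ m i / fact (m i)))"

text \<open>Riemann zeta at integer arguments; only used for s \<ge> 2, where it is the convergent series.\<close>
definition zeta_nat :: "nat \<Rightarrow> real" where
  "zeta_nat s = (\<Sum>n. 1 / (real (Suc n)) ^ s)"

end

theory Submission
  imports Defs
begin


fun EE :: "nat \<Rightarrow> nat \<Rightarrow> real" where
  "EE 0 n = 1"
| "EE (Suc k) 0 = 0"
| "EE (Suc k) (Suc n) = EE (Suc k) n + EE k n / real (Suc n)"

fun HH :: "nat \<Rightarrow> nat \<Rightarrow> real" where
  "HH 0 n = 1"
| "HH (Suc k) 0 = 0"
| "HH (Suc k) (Suc n) = HH (Suc k) n + HH k (Suc n) / real (Suc n)"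

lemma hnum_Suc: "hnum i (Suc n) = hnum i n + (1 / real (Suc n)) ^ i"
  unfolding hnum_def by (simp add: power_one_over)

lemma neg1_pow_pred: "1 \<le> i \<Longrightarrow> (-1::real)^i = - ((-1)^(i-1))"
  by (cases i) auto

lemma EE_A:
  fixes x :: real
  assumes g: "\<And>j. g (Suc j) = f (Suc j) + x * f j" and g0: "g 0 = 1" and f0: "f 0 = 1"
  shows "(\<Sum>i=1..Suc k. (-1)^(i-1) * x^i * g (Suc k - i)) = x * f k"
proof (induction k)
  case 0 then show ?case using g0 f0 by simp
next
  case (Suc k)
  have "(\<Sum>i=1..Suc (Suc k). (-1)^(i-1) * x^i * g (Suc (Suc k) - i))
      = x * g (Suc k) + (\<Sum>i=Suc 1..Suc (Suc k). (-1)^(i-1) * x^i * g (Suc (Suc k) - i))"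
    by (subst sum.atLeast_Suc_atMost) auto
  also have "(\<Sum>i=Suc 1..Suc (Suc k). (-1)^(i-1) * x^i * g (Suc (Suc k) - i))
      = (\<Sum>i=1..Suc k. (-1)^(Suc i-1) * x^(Suc i) * g (Suc (Suc k) - Suc i))"
    by (rule sum.shift_bounds_cl_Suc_ivl)
  also have "\<dots> = - x * (\<Sum>i=1..Suc k. (-1)^(i-1) * x^i * g (Suc k - i))"
    unfolding sum_distrib_left
    by (rule sum.cong) (auto simp: power_Suc neg1_pow_pred)
  also have "\<dots> = - x * (x * f k)" using Suc by simp
  finally show ?case using g[of k] by (simp add: algebra_simps power2_eq_square)
qed

lemma EE_0n: "EE k 0 = (if k = 0 then 1 else 0)"
  by (cases k) auto

lemma EE_split: "EE (Suc m - i) (Suc n) = EE (Suc m - i) n + (if i \<le> m then EE (m - i) n / real (Suc n) else 0)"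
proof (cases "i \<le> m")
  case True
  then have "Suc m - i = Suc (m - i)" by simp
  then show ?thesis using True by simp
next
  case False
  then have "Suc m - i = 0" by simp
  then show ?thesis using False by simp
qed

lemma newton_EE: "real k * EE k n = (\<Sum>i=1..k. (-1)^(i-1) * hnum i n * EE (k-i) n)"
proof (induction n arbitrary: k)
  case 0
  then show ?case by (simp add: hnum_def EE_0n)
next
  case (Suc n)
  show ?case
  proof (cases k)
    case 0 then show ?thesis by simp
  next
    case (Suc m)
    define x where "x = 1 / real (Suc n)"
    have A: "(\<Sum>i=1..Suc m. (-1)^(i-1) * x^i * EE (Suc m - i) (Suc n)) = x * EE m n"
      by (rule EE_A) (auto simp: x_def)
    have B: "(\<Sum>i=1..Suc m. (-1)^(i-1) * hnum i n * EE (Suc m - i) (Suc n))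
       = (\<Sum>i=1..Suc m. (-1)^(i-1) * hnum i n * EE (Suc m - i) n)
         + x * (\<Sum>i=1..m. (-1)^(i-1) * hnum i n * EE (m - i) n)"
    proof -
      have "(\<Sum>i=1..Suc m. (-1)^(i-1) * hnum i n * EE (Suc m - i) (Suc n))
        = (\<Sum>i=1..Suc m. (-1)^(i-1) * hnum i n * EE (Suc m - i) n)
          + (\<Sum>i=1..Suc m. (if i \<le> m then x * ((-1)^(i-1) * hnum i n * EE (m - i) n) else 0))"
        unfolding sum.distrib[symmetric] EE_split
        by (rule sum.cong) (auto simp: x_def algebra_simps)
      also have "(\<Sum>i=1..Suc m. (if i \<le> m then x * ((-1)^(i-1) * hnum i n * EE (m - i) n) else 0))
         = (\<Sum>i=1..m. x * ((-1)^(i-1) * hnum i n * EE (m - i) n))"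
        by (subst sum.If_cases) (auto intro!: sum.cong)
      finally show ?thesis by (simp add: sum_distrib_left)
    qed
    have "(\<Sum>i=1..Suc m. (-1)^(i-1) * hnum i (Suc n) * EE (Suc m - i) (Suc n))
      = (\<Sum>i=1..Suc m. (-1)^(i-1) * hnum i n * EE (Suc m - i) (Suc n))
        + (\<Sum>i=1..Suc m. (-1)^(i-1) * x^i * EE (Suc m - i) (Suc n))"
      unfolding sum.distrib[symmetric] hnum_Suc x_def
      by (rule sum.cong) (auto simp: algebra_simps)
    also have "\<dots> = real (Suc m) * EE (Suc m) n + x * (real m * EE m n) + x * EE m n"
      using A B Suc.IH[of "Suc m"] Suc.IH[of m] by simp
    also have "\<dots> = real (Suc m) * EE (Suc m) (Suc n)"
      by (simp add: x_def algebra_simps add_divide_distrib)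
    finally show ?thesis using Suc by simp
  qed
qed

lemma HH_0n: "HH k 0 = (if k = 0 then 1 else 0)"
  by (cases k) auto

lemma HH_split: "HH (Suc m - i) (Suc n) = HH (Suc m - i) n + (if i \<le> m then HH (m - i) (Suc n) / real (Suc n) else 0)"
proof (cases "i \<le> m")
  case True
  then have "Suc m - i = Suc (m - i)" by simp
  then show ?thesis using True by simp
next
  case False
  then have "Suc m - i = 0" by simp
  then show ?thesis using False by simp
qed

lemma newton_HH: "real k * HH k n = (\<Sum>i=1..k. hnum i n * HH (k-i) n)"
proof (induction n arbitrary: k)
  case 0
  then show ?case by (simp add: hnum_def HH_0n)
next
  case (Suc n)
  define x where "x = 1 / real (Suc n)"
  have IHn: "\<And>k. real k * HH k n = (\<Sum>i=1..k. hnum i n * HH (k-i) n)" by (rule Suc.IH)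
  show ?case
  proof (induction k)
    case 0 then show ?case by simp
  next
    case (Suc m)
    have IHk: "real m * HH m (Suc n) = (\<Sum>i=1..m. hnum i n * HH (m-i) (Suc n)) + (\<Sum>i=1..m. x^i * HH (m-i) (Suc n))"
      using Suc.IH unfolding hnum_Suc x_def sum.distrib[symmetric] by (simp add: algebra_simps)
    have B: "(\<Sum>i=1..Suc m. hnum i n * HH (Suc m - i) (Suc n))
       = (\<Sum>i=1..Suc m. hnum i n * HH (Suc m - i) n)
         + x * (\<Sum>i=1..m. hnum i n * HH (m - i) (Suc n))"
    proof -
      have "(\<Sum>i=1..Suc m. hnum i n * HH (Suc m - i) (Suc n))
        = (\<Sum>i=1..Suc m. hnum i n * HH (Suc m - i) n)
          + (\<Sum>i=1..Suc m. (if i \<le> m then x * (hnum i n * HH (m - i) (Suc n)) else 0))"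
        unfolding sum.distrib[symmetric] HH_split
        by (rule sum.cong) (auto simp: x_def algebra_simps)
      also have "(\<Sum>i=1..Suc m. (if i \<le> m then x * (hnum i n * HH (m - i) (Suc n)) else 0))
         = (\<Sum>i=1..m. x * (hnum i n * HH (m - i) (Suc n)))"
        by (subst sum.If_cases) (auto intro!: sum.cong)
      finally show ?thesis by (simp add: sum_distrib_left)
    qed
    have C: "(\<Sum>i=1..Suc m. x^i * HH (Suc m - i) (Suc n))
        = x * HH m (Suc n) + x * (\<Sum>i=1..m. x^i * HH (m - i) (Suc n))"
    proof -
      have "(\<Sum>i=1..Suc m. x^i * HH (Suc m - i) (Suc n))
          = x * HH m (Suc n) + (\<Sum>i=Suc 1..Suc m. x^i * HH (Suc m - i) (Suc n))"
        by (subst sum.atLeast_Suc_atMost) auto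
      also have "(\<Sum>i=Suc 1..Suc m. x^i * HH (Suc m - i) (Suc n))
          = (\<Sum>i=1..m. x^(Suc i) * HH (Suc m - Suc i) (Suc n))"
        by (rule sum.shift_bounds_cl_Suc_ivl)
      also have "\<dots> = x * (\<Sum>i=1..m. x^i * HH (m - i) (Suc n))"
        unfolding sum_distrib_left by (rule sum.cong) auto
      finally show ?thesis .
    qed
    have "(\<Sum>i=1..Suc m. hnum i (Suc n) * HH (Suc m - i) (Suc n))
      = (\<Sum>i=1..Suc m. hnum i n * HH (Suc m - i) (Suc n))
        + (\<Sum>i=1..Suc m. x^i * HH (Suc m - i) (Suc n))"
      unfolding sum.distrib[symmetric] hnum_Suc x_def
      by (rule sum.cong) (auto simp: algebra_simps)
    also have "\<dots> = real (Suc m) * HH (Suc m) n + x * (real m * HH m (Suc n)) + x * HH m (Suc n)"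
      using B C IHk IHn[of "Suc m"] by (simp del: sum.cl_ivl_Suc add: algebra_simps)
    also have "\<dots> = real (Suc m) * HH (Suc m) (Suc n)"
      by (simp add: x_def algebra_simps add_divide_distrib)
    finally show ?case by simp
  qed
qed

definition tt :: "(nat \<Rightarrow> real) \<Rightarrow> nat set \<Rightarrow> (nat \<Rightarrow> nat) \<Rightarrow> real" where
  "tt y I m = (\<Prod>j\<in>I. (y j / real j) ^ m j / fact (m j))"

lemma Qpoly_tt: "Qpoly k y = (\<Sum>m\<in>part_tuples k. tt y {1..k} m)"
  unfolding Qpoly_def tt_def ..

lemma finite_part_tuples: "finite (part_tuples k)"
  unfolding part_tuples_def by (rule finite_subset[of _ "PiE {1..k} (\<lambda>_. {0..k})"]) (auto intro: finite_PiE)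

lemma part_tuples_sum: "m \<in> part_tuples k \<Longrightarrow> (\<Sum>j=1..k. j * m j) = k"
  unfolding part_tuples_def by auto

lemma part_tuples_le1: "m \<in> part_tuples k \<Longrightarrow> j \<in> {1..k} \<Longrightarrow> j * m j \<le> k"
  using part_tuples_sum[of m k] member_le_sum[of j "{1..k}" "\<lambda>j. j * m j"] by auto

lemma part_tuples_le2: "m \<in> part_tuples k \<Longrightarrow> j1 \<in> {1..k} \<Longrightarrow> j2 \<in> {1..k} \<Longrightarrow> j1 \<noteq> j2
   \<Longrightarrow> j1 * m j1 + j2 * m j2 \<le> k"
proof -
  assume m: "m \<in> part_tuples k" and j: "j1 \<in> {1..k}" "j2 \<in> {1..k}" "j1 \<noteq> j2"
  have "(\<Sum>j\<in>{j1,j2}. j * m j) \<le> (\<Sum>j=1..k. j * m j)"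
    by (rule sum_mono2) (use j in auto)
  then show ?thesis using part_tuples_sum[OF m] j by simp
qed

definition phi :: "nat \<Rightarrow> nat \<Rightarrow> (nat \<Rightarrow> nat) \<Rightarrow> nat \<Rightarrow> nat" where
  "phi k i m' = (\<lambda>j. if j \<in> {1..k} then (if j \<le> k - i then m' j else 0) + (if j = i then 1 else 0) else undefined)"

definition psi :: "nat \<Rightarrow> nat \<Rightarrow> (nat \<Rightarrow> nat) \<Rightarrow> nat \<Rightarrow> nat" where
  "psi k i m = (\<lambda>j. if j \<in> {1..k-i} then m j - (if j = i then 1 else 0) else undefined)"

lemma phi_sum:
  assumes "1 \<le> i" "i \<le> k"
  shows "(\<Sum>j=1..k. j * phi k i m' j) = (\<Sum>j=1..k-i. j * m' j) + i"
proof -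
  have "(\<Sum>j=1..k. j * phi k i m' j) = (\<Sum>j=1..k. j * (if j \<le> k - i then m' j else 0)) + (\<Sum>j=1..k. j * (if j = i then 1 else 0))"
    unfolding sum.distrib[symmetric] phi_def by (rule sum.cong) (auto simp: algebra_simps)
  also have "(\<Sum>j=1..k. j * (if j \<le> k - i then m' j else 0)) = (\<Sum>j=1..k-i. j * m' j)"
    by (rule sum.mono_neutral_cong_right) auto
  also have "(\<Sum>j=1..k. j * (if j = i then 1 else 0)) = i"
  proof -
    have "(\<Sum>j=1..k. j * (if j = i then 1 else 0)) = (\<Sum>j=1..k. if i = j then j else 0)"
      by (intro sum.cong) auto
    then show ?thesis using assms by (simp add: sum.delta)
  qed
  finally show ?thesis .
qed

lemma supp_lemma:
  assumes m: "m \<in> part_tuples k" and i: "1 \<le> i" "i \<le> k" "1 \<le> m i" and j: "j \<in> {1..k}" "k - i < j"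
  shows "m j = (if j = i then 1 else 0)"
proof (cases "j = i")
  case True
  show ?thesis
  proof (rule ccontr)
    assume "m j \<noteq> (if j = i then 1 else 0)"
    then have "2 \<le> m i" using True i by auto
    then have "i * 2 \<le> i * m i" by simp
    also have "\<dots> \<le> k" using part_tuples_le1[OF m, of i] i by auto
    finally show False using True j by auto
  qed
next
  case False
  show ?thesis
  proof (rule ccontr)
    assume "m j \<noteq> (if j = i then 1 else 0)"
    then have "1 \<le> m j" using False by auto
    have "j * 1 + i * 1 \<le> j * m j + i * m i"
      using \<open>1 \<le> m j\<close> i by (intro add_mono mult_le_mono) auto
    also have "\<dots> \<le> k" using part_tuples_le2[OF m, of j i] False i j by auto
    finally show False using j by auto
  qed
qed

lemma mem_part_tuples: "m \<in> part_tuples k \<longleftrightarrow>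
   (\<forall>j\<in>{1..k}. m j \<le> k) \<and> (\<forall>j. j \<notin> {1..k} \<longrightarrow> m j = undefined) \<and> (\<Sum>j=1..k. j * m j) = k"
  unfolding part_tuples_def PiE_iff extensional_def by auto

lemma psi_phi:
  assumes "m' \<in> part_tuples (k - i)" "1 \<le> i" "i \<le> k"
  shows "psi k i (phi k i m') = m'"
proof
  fix j show "psi k i (phi k i m') j = m' j"
    using assms unfolding mem_part_tuples psi_def phi_def by auto
qed

lemma phi_mem:
  assumes "m' \<in> part_tuples (k - i)" "1 \<le> i" "i \<le> k"
  shows "phi k i m' \<in> part_tuples k" "1 \<le> phi k i m' i"
proof -
  have s: "(\<Sum>j=1..k. j * phi k i m' j) = k"
    using phi_sum[OF assms(2,3), of m'] assms(1) unfolding mem_part_tuples using assms by auto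
  have "\<forall>j\<in>{1..k}. phi k i m' j \<le> k"
  proof
    fix j assume j: "j \<in> {1..k}"
    show "phi k i m' j \<le> k"
    proof (cases "j \<le> k - i")
      case True
      then have "m' j \<le> k - i" using assms(1) j unfolding mem_part_tuples by auto
      then show ?thesis using True j assms by (auto simp: phi_def)
    next
      case False
      then show ?thesis using j assms by (auto simp: phi_def)
    qed
  qed
  then show "phi k i m' \<in> part_tuples k"
    using s unfolding mem_part_tuples by (auto simp: phi_def)
  show "1 \<le> phi k i m' i" using assms by (simp add: phi_def)
qed

lemma phi_psi:
  assumes m: "m \<in> part_tuples k" and i: "1 \<le> i" "i \<le> k" "1 \<le> m i"
  shows "phi k i (psi k i m) = m"
proof
  fix j
  show "phi k i (psi k i m) j = m j"
  proof (cases "j \<in> {1..k}")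
    case True
    show ?thesis
    proof (cases "j \<le> k - i")
      case True2: True
      then show ?thesis using True i unfolding phi_def psi_def by auto
    next
      case False
      then show ?thesis using supp_lemma[OF m i, of j] True unfolding phi_def psi_def by auto
    qed
  next
    case False
    then show ?thesis using m unfolding mem_part_tuples phi_def by auto
  qed
qed

lemma psi_mem:
  assumes m: "m \<in> part_tuples k" and i: "1 \<le> i" "i \<le> k" "1 \<le> m i"
  shows "psi k i m \<in> part_tuples (k - i)"
proof -
  have bound: "psi k i m j \<le> k - i" if j: "j \<in> {1..k-i}" for j
  proof (cases "j = i")
    case True
    have "i * m i \<le> k" using part_tuples_le1[OF m, of i] i by auto
    then have a: "i * (m i - 1) \<le> k - i" by (simp add: diff_mult_distrib2)
    have b: "m i - 1 \<le> i * (m i - 1)" using i by simp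
    have "m i - 1 \<le> k - i" using order_trans[OF b a] .
    then show ?thesis using True j by (simp add: psi_def)
  next
    case False
    have "j * m j + i * m i \<le> k" using part_tuples_le2[OF m, of j i] False i j by auto
    moreover have "i \<le> i * m i" using i by simp
    moreover have "m j \<le> j * m j" using j by simp
    ultimately have "m j + i \<le> k" by linarith
    then show ?thesis using False j by (simp add: psi_def)
  qed
  have "(\<Sum>j=1..k. j * phi k i (psi k i m) j) = (\<Sum>j=1..k-i. j * psi k i m j) + i"
    by (rule phi_sum[OF i(1,2)])
  then have "(\<Sum>j=1..k-i. j * psi k i m j) = k - i"
    using phi_psi[OF assms] part_tuples_sum[OF m] by simp
  then show ?thesis using bound unfolding mem_part_tuples by (auto simp: psi_def)
qed

lemma tt_mono:
  assumes "finite J" "I \<subseteq> J" "\<And>j. j \<in> J - I \<Longrightarrow> m j = 0"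
  shows "tt y J m = tt y I m"
  unfolding tt_def by (rule prod.mono_neutral_cong_right) (use assms in auto)

lemma tt_cong: "(\<And>j. j \<in> I \<Longrightarrow> m j = m' j) \<Longrightarrow> tt y I m = tt y I m'"
  unfolding tt_def by (rule prod.cong) auto

lemma aux4_gen0: "(i::real) > 0 \<Longrightarrow> c > 0 \<Longrightarrow> (b::real) > 0 \<Longrightarrow>
   i * b * ((z / i) * w / (b * c)) = z * (w / c)"
  by (simp add: field_simps)

lemma aux4_gen: "(i::real) > 0 \<Longrightarrow> c > 0 \<Longrightarrow> (a::real) \<ge> 0 \<Longrightarrow>
   i * (a + 1) * ((z / i) * w / ((a + 1) * c)) = z * (w / c)"
  using aux4_gen0[of i c "a+1" z w] by simp

lemma aux4: "(i::nat) \<ge> 1 \<Longrightarrow> real (i * (a + 1)) * ((z / real i) ^ (a + 1) / fact (a + 1)) = z * ((z / real i) ^ a / fact a)"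
proof -
  assume i: "i \<ge> 1"
  have "fact (a+1) = (real a + 1) * (fact a :: real)" by (simp add: algebra_simps)
  moreover have "(z / real i) ^ (a + 1) = (z / real i) * (z / real i) ^ a" by simp
  moreover have "real (i * (a + 1)) = real i * (real a + 1)" by (simp add: algebra_simps)
  ultimately have "real (i * (a + 1)) * ((z / real i) ^ (a + 1) / fact (a + 1))
     = real i * (real a + 1) * ((z / real i) * (z / real i) ^ a / ((real a + 1) * fact a))"
    by (simp only:)
  also have "\<dots> = z * ((z / real i) ^ a / fact a)"
    by (rule aux4_gen) (use i in auto)
  finally show ?thesis .
qed

lemma phi_term:
  assumes m': "m' \<in> part_tuples (k - i)" and i: "1 \<le> i" "i \<le> k"
  shows "real (i * phi k i m' i) * tt y {1..k} (phi k i m') = y i * tt y {1..k-i} m'"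
proof -
  define m0 where "m0 = (\<lambda>j. if j \<le> k - i then m' j else 0)"
  define f where "f = (\<lambda>j a. (y j / real j) ^ a / fact a)"
  have ik: "i \<in> {1..k}" using i by auto
  have 1: "tt y {1..k-i} m' = tt y {1..k} m0"
  proof -
    have "tt y {1..k-i} m' = tt y {1..k-i} m0" by (rule tt_cong) (auto simp: m0_def)
    also have "\<dots> = tt y {1..k} m0" by (rule tt_mono[symmetric]) (auto simp: m0_def)
    finally show ?thesis .
  qed
  have 2: "tt y {1..k} m0 = f i (m0 i) * (\<Prod>j\<in>{1..k}-{i}. f j (m0 j))"
    unfolding tt_def f_def by (rule prod.remove[OF _ ik]) simp
  have 3: "tt y {1..k} (phi k i m') = f i (m0 i + 1) * (\<Prod>j\<in>{1..k}-{i}. f j (m0 j))"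
  proof -
    have "tt y {1..k} (phi k i m') = f i (phi k i m' i) * (\<Prod>j\<in>{1..k}-{i}. f j (phi k i m' j))"
      unfolding tt_def f_def by (rule prod.remove[OF _ ik]) simp
    also have "(\<Prod>j\<in>{1..k}-{i}. f j (phi k i m' j)) = (\<Prod>j\<in>{1..k}-{i}. f j (m0 j))"
      by (rule prod.cong) (auto simp: phi_def m0_def)
    also have "phi k i m' i = m0 i + 1" using ik by (simp add: phi_def m0_def)
    finally show ?thesis .
  qed
  have 4: "real (i * (a + 1)) * f i (a + 1) = y i * f i a" for a
    using aux4[OF i(1)] by (simp add: f_def)
  have "phi k i m' i = m0 i + 1" using ik by (simp add: phi_def m0_def)
  then show ?thesis using 1 2 3 4[of "m0 i"] by (simp add: mult.assoc)
qed

lemma Qpoly_inner: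
  assumes i: "1 \<le> i" "i \<le> k"
  shows "(\<Sum>m\<in>part_tuples k. real (i * m i) * tt y {1..k} m) = y i * Qpoly (k - i) y"
proof -
  have "(\<Sum>m\<in>part_tuples k. real (i * m i) * tt y {1..k} m)
      = (\<Sum>m\<in>{m\<in>part_tuples k. 1 \<le> m i}. real (i * m i) * tt y {1..k} m)"
    by (rule sum.mono_neutral_right) (auto simp: finite_part_tuples)
  also have "\<dots> = (\<Sum>m'\<in>part_tuples (k - i). y i * tt y {1..k-i} m')"
  proof (rule sum.reindex_bij_witness[of _ "psi k i" "phi k i", symmetric])
    fix a assume a: "a \<in> part_tuples (k - i)"
    show "psi k i (phi k i a) = a" by (rule psi_phi[OF a i])
    show "phi k i a \<in> {m \<in> part_tuples k. 1 \<le> m i}" using phi_mem[OF a i] by simp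
    show "real (i * phi k i a i) * tt y {1..k} (phi k i a) = y i * tt y {1..k - i} a"
      by (rule phi_term[OF a i])
  next
    fix b assume b: "b \<in> {m \<in> part_tuples k. 1 \<le> m i}"
    show "phi k i (psi k i b) = b" using phi_psi[of b k i] b i by simp
    show "psi k i b \<in> part_tuples (k - i)" using psi_mem[of b k i] b i by simp
  qed
  also have "\<dots> = y i * Qpoly (k - i) y"
    by (simp add: Qpoly_tt sum_distrib_left)
  finally show ?thesis .
qed

lemma Qpoly_rec: "real k * Qpoly k y = (\<Sum>i=1..k. y i * Qpoly (k-i) y)"
proof -
  have "real k * Qpoly k y = (\<Sum>m\<in>part_tuples k. real k * tt y {1..k} m)"
    by (simp add: Qpoly_tt sum_distrib_left)
  also have "\<dots> = (\<Sum>m\<in>part_tuples k. \<Sum>i=1..k. real (i * m i) * tt y {1..k} m)"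
  proof (rule sum.cong[OF refl])
    fix m assume m: "m \<in> part_tuples k"
    have "real k = (\<Sum>i=1..k. real (i * m i))"
      using part_tuples_sum[OF m] by (metis of_nat_sum)
    then show "real k * tt y {1..k} m = (\<Sum>i=1..k. real (i * m i) * tt y {1..k} m)"
      by (simp add: sum_distrib_right)
  qed
  also have "\<dots> = (\<Sum>i=1..k. \<Sum>m\<in>part_tuples k. real (i * m i) * tt y {1..k} m)"
    by (rule sum.swap)
  also have "\<dots> = (\<Sum>i=1..k. y i * Qpoly (k-i) y)"
    by (intro sum.cong refl Qpoly_inner) auto
  finally show ?thesis .
qed

lemma part_tuples_0: "part_tuples 0 = {\<lambda>_. undefined}"
  unfolding part_tuples_def by auto

lemma Qpoly_0: "Qpoly 0 y = 1"
  unfolding Qpoly_def part_tuples_0 by simp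

lemma Ppoly_0: "Ppoly 0 y = 1"
  unfolding Ppoly_def part_tuples_0 by simp

lemma pow_helper: "(c::real)^n * (a/d)^n / f = (c * a / d)^n / f"
  by (simp add: power_mult_distrib power_divide)

lemma Ppoly_Qpoly: "Ppoly k y = Qpoly k (\<lambda>j. (if even j then -1 else 1) * y j)"
  unfolding Ppoly_def Qpoly_def
proof (rule sum.cong[OF refl])
  fix m assume m: "m \<in> part_tuples k"
  have "(-1::real) ^ (\<Sum>i\<in>{i\<in>{1..k}. even i}. m i) = (\<Prod>i\<in>{i\<in>{1..k}. even i}. (-1) ^ m i)"
    by (simp add: power_sum)
  also have "\<dots> = (\<Prod>i=1..k. (if even i then -1 else 1) ^ m i)"
    by (rule prod.mono_neutral_cong_left) auto
  finally have s: "(-1::real) ^ (\<Sum>i\<in>{i\<in>{1..k}. even i}. m i) = (\<Prod>i=1..k. (if even i then -1 else 1) ^ m i)" .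
  show "(-1) ^ (\<Sum>i\<in>{i\<in>{1..k}. even i}. m i) * (\<Prod>i=1..k. (y i / real i) ^ m i / fact (m i)) =
        (\<Prod>i=1..k. ((if even i then -1 else 1) * y i / real i) ^ m i / fact (m i))"
    unfolding s prod.distrib[symmetric]
    by (rule prod.cong) (simp_all add: pow_helper)
qed

lemma Ppoly_rec: "real k * Ppoly k y = (\<Sum>i=1..k. (-1)^(i-1) * y i * Ppoly (k-i) y)"
  unfolding Ppoly_Qpoly Qpoly_rec
  by (rule sum.cong) (auto simp: neg1_pow_pred)

lemma rec_unique:
  fixes f g :: "nat \<Rightarrow> real"
  assumes "f 0 = g 0"
    and "\<And>k. real k * f k = (\<Sum>i=1..k. c i * f (k-i))"
    and "\<And>k. real k * g k = (\<Sum>i=1..k. c i * g (k-i))"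
  shows "f k = g k"
proof (induction k rule: less_induct)
  case (less k)
  show ?case
  proof (cases k)
    case 0 then show ?thesis using assms(1) by simp
  next
    case (Suc m)
    have "(\<Sum>i=1..k. c i * f (k-i)) = (\<Sum>i=1..k. c i * g (k-i))"
      by (rule sum.cong) (use less Suc in auto)
    then have "real k * f k = real k * g k" using assms(2,3) by simp
    then show ?thesis using Suc by simp
  qed
qed

lemma Ppoly_EE: "Ppoly k (\<lambda>i. hnum i n) = EE k n"
  by (rule rec_unique[where c = "\<lambda>i. (-1)^(i-1) * hnum i n"])
     (simp_all add: Ppoly_0 Ppoly_rec newton_EE mult.assoc)

lemma Qpoly_HH: "Qpoly k (\<lambda>i. hnum i n) = HH k n"
  by (rule rec_unique[where c = "\<lambda>i. hnum i n"])
     (simp_all add: Qpoly_0 Qpoly_rec newton_HH)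


lemma nonneg_swap:
  fixes f :: "nat \<Rightarrow> nat \<Rightarrow> real"
  assumes nn: "\<And>n s. f n s \<ge> 0" and row: "\<And>n. (\<lambda>s. f n s) sums g n" and g: "summable g"
  shows "summable (\<lambda>n. f n s)" and "(\<lambda>s. \<Sum>n. f n s) sums (\<Sum>n. g n)"
proof -
  have hrow: "((\<lambda>s. f n s) has_sum g n) UNIV" for n
    by (rule sums_nonneg_imp_has_sum[OF row nn])
  have gnn: "g n \<ge> 0" for n
    using row[of n] nn by (metis sums_le sums_zero)
  have hg: "(g has_sum (\<Sum>n. g n)) UNIV"
    by (rule sums_nonneg_imp_has_sum[OF summable_sums[OF g] gnn])
  define F where "F = (\<lambda>(n,s). f n s)"
  have Fs: "F summable_on Sigma UNIV (\<lambda>_. UNIV)"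
    by (rule summable_on_SigmaI[where g = g]) (use hrow hg nn in \<open>auto simp: F_def summable_on_def\<close>)
  have FS: "(F has_sum (\<Sum>n. g n)) (UNIV \<times> UNIV)"
    by (rule has_sum_SigmaI[where g = g]) (use hrow hg Fs in \<open>auto simp: F_def\<close>)
  have FS': "((\<lambda>(s,n). f n s) has_sum (\<Sum>n. g n)) (UNIV \<times> UNIV)"
    using FS unfolding has_sum_swap[of F] by (simp add: F_def)
  have cs: "(\<lambda>n. f n s') summable_on UNIV" for s'
    using summable_on_SigmaD1[of "\<lambda>s n. f n s" UNIV "\<lambda>_. UNIV" s'] FS' by (auto simp: summable_on_def)
  show sm: "summable (\<lambda>n. f n s)" for s
    using cs[of s] summable_on_UNIV_nonneg_real_iff[of "\<lambda>n. f n s"] nn by auto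
  have hc: "((\<lambda>n. f n s') has_sum (\<Sum>n. f n s')) UNIV" for s'
    by (rule sums_nonneg_imp_has_sum[OF summable_sums[OF sm] nn])
  have "((\<lambda>s. \<Sum>n. f n s) has_sum (\<Sum>n. g n)) UNIV"
    by (rule has_sum_SigmaD[where f = "\<lambda>(s,n). f n s" and A = UNIV and B = "\<lambda>_. UNIV"]) (use FS' hc in auto)
  then show "(\<lambda>s. \<Sum>n. f n s) sums (\<Sum>n. g n)" by (rule has_sum_imp_sums)
qed


lemma powser_zero_unique:
  fixes c :: "nat \<Rightarrow> real"
  assumes d: "d > 0" and z: "\<And>z. 0 < z \<Longrightarrow> z < d \<Longrightarrow> (\<lambda>s. c s * z^s) sums 0"
  shows "c s = 0"
proof (induction s rule: less_induct)
  case (less s)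
  have sh: "(\<lambda>n. c (n + s) * z^n) sums 0" if zz: "0 < z" "z < d" for z
  proof -
    have "(\<lambda>n. c (n + s) * z^(n + s)) sums (0 - (\<Sum>i<s. c i * z^i))"
      by (rule sums_split_initial_segment[OF z[OF zz]])
    also have "(\<Sum>i<s. c i * z^i) = 0" using less by simp
    finally have "(\<lambda>n. c (n + s) * z^(n + s)) sums 0" by simp
    then have "(\<lambda>n. (c (n + s) * z^(n + s)) * (1 / z^s)) sums (0 * (1 / z^s))"
      by (rule sums_mult2)
    moreover have "(c (n + s) * z^(n + s)) * (1 / z^s) = c (n + s) * z^n" for n
      using zz by (simp add: power_add)
    ultimately show ?thesis by simp
  qed
  define g where "g = (\<lambda>w. \<Sum>n. c (n + s) * w^n)"
  define K where "K = d / 2"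
  have K: "0 < K" "K < d" using d by (auto simp: K_def)
  have "summable (\<lambda>n. c (n + s) * K^n)" using sh[OF K] by (simp add: sums_iff)
  then have "isCont g 0" unfolding g_def by (rule isCont_powser) (use K in simp)
  then have "(g \<longlongrightarrow> g 0) (at_right 0)"
    unfolding isCont_def by (rule tendsto_mono[rotated]) (simp add: at_le)
  moreover have "eventually (\<lambda>w. g w = 0) (at_right 0)"
    unfolding eventually_at_right_field
    by (rule exI[of _ K]) (use K sh in \<open>auto simp: g_def sums_iff\<close>)
  then have "(g \<longlongrightarrow> 0) (at_right 0)" by (rule tendsto_eventually)
  ultimately have "g 0 = 0" using tendsto_unique[OF trivial_limit_at_right_real] by blast
  moreover have "g 0 = c s" unfolding g_def using powser_zero[of "\<lambda>n. c (n + s)"] by simp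
  ultimately show ?case by simp
qed

lemma powser_unique:
  fixes a b :: "nat \<Rightarrow> real"
  assumes d: "d > 0"
    and a: "\<And>z. 0 < z \<Longrightarrow> z < d \<Longrightarrow> (\<lambda>s. a s * z^s) sums F z"
    and b: "\<And>z. 0 < z \<Longrightarrow> z < d \<Longrightarrow> (\<lambda>s. b s * z^s) sums F z"
  shows "a s = b s"
proof -
  have "(\<lambda>s. a s - b s) s = 0"
  proof (rule powser_zero_unique[OF d])
    fix z :: real assume "0 < z" "z < d"
    from sums_diff[OF a[OF this] b[OF this]] show "(\<lambda>s. (a s - b s) * z^s) sums 0"
      by (simp add: algebra_simps)
  qed
  then show ?thesis by simp
qed

lemma poly_unique:
  fixes p q :: "nat \<Rightarrow> real"
  assumes "\<And>x. 0 < x \<Longrightarrow> x < 1 \<Longrightarrow> (\<Sum>k\<le>s. p k * x^k) = (\<Sum>k\<le>s. q k * x^k)"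
    and "k \<le> s"
  shows "p k = q k"
proof -
  define a where "a = (\<lambda>k. if k \<le> s then p k else 0)"
  define b where "b = (\<lambda>k. if k \<le> s then q k else 0)"
  have "a k = b k"
  proof (rule powser_unique[where d = 1 and F = "\<lambda>x. \<Sum>k\<le>s. p k * x^k"])
    fix z :: real assume z: "0 < z" "z < 1"
    have "(\<lambda>k. a k * z^k) sums (\<Sum>k\<in>{..s}. a k * z^k)"
      by (rule sums_finite) (auto simp: a_def)
    then show "(\<lambda>k. a k * z^k) sums (\<Sum>k\<le>s. p k * z^k)" by (simp add: a_def)
    have "(\<lambda>k. b k * z^k) sums (\<Sum>k\<in>{..s}. b k * z^k)"
      by (rule sums_finite) (auto simp: b_def)
    then show "(\<lambda>k. b k * z^k) sums (\<Sum>k\<le>s. p k * z^k)" using assms(1)[OF z] by (simp add: b_def)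
  qed simp
  then show ?thesis using assms(2) by (simp add: a_def b_def)
qed


lemma s1a:
  fixes P a u :: real
  assumes "a \<noteq> 0" "P \<noteq> 0"
  shows "(-u/a/P) * (P + a) = -u/a + (-u)/P"
  using assms by (simp add: field_simps)

lemma s1b:
  fixes Q a b u :: real
  assumes "a \<noteq> 0" "b \<noteq> 0" "Q \<noteq> 0"
  shows "(-u*(1+u)/(b*a)/Q) * (Q + b) = -u*(1+u)/(b*a) + (-u*(1+u)/a)/Q"
  using assms by (simp add: field_simps)

lemma s2:
  fixes P Q a c u :: real
  assumes "a \<noteq> 0" "c \<noteq> 0" "P \<noteq> 0" "Q \<noteq> 0"
  shows "(-u/c/P + -u*(1+u)/(a*c)/Q) * c = (-u)/P + (-u*(1+u)/a)/Q"
  using assms by (simp add: field_simps)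

lemma s3:
  fixes a b c u :: real
  assumes "a \<noteq> 0" "b \<noteq> 0" "c \<noteq> 0" "b = a - 1"
  shows "-u/a + -u*(1+u)/(b*a) = -u*(a+u)/(b*a*c) * c"
proof -
  have "-u*(a+u)/(b*a*c) * c = -u*(a+u)/(b*a)" using assms by simp
  also have "\<dots> = -u*b/(b*a) + -u*(1+u)/(b*a)"
    using assms by (simp add: field_simps) (simp add: algebra_simps assms(4))
  also have "-u*b/(b*a) = -u/a" using assms by simp
  finally show ?thesis by simp
qed

definition AA :: "real \<Rightarrow> real \<Rightarrow> nat \<Rightarrow> real" where
  "AA t u n = (\<Prod>j=1..n. (real j + t) / (real j - u))"

definition PP :: "real \<Rightarrow> real \<Rightarrow> nat \<Rightarrow> nat \<Rightarrow> real" where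
  "PP t u n m = (\<Prod>j=1..n. (real j + t) / (real j + real m - u))"

definition ww :: "real \<Rightarrow> nat \<Rightarrow> nat \<Rightarrow> real" where
  "ww u n m = (-u/(real m - u))/(real n + 1) + (-u*(1+u)/((real m - 1 - u)*(real m - u)))/(real n + 2)"

definition aa :: "real \<Rightarrow> real \<Rightarrow> nat \<Rightarrow> nat \<Rightarrow> real" where
  "aa t u n m = PP t u n m * ww u n m"

definition ss :: "real \<Rightarrow> real \<Rightarrow> nat \<Rightarrow> real" where
  "ss t u m = -u * real m / ((real m - 1 - u) * (real m - u) * (real m - u - t))"

lemma PP_0m: "PP t u n 0 = AA t u n"
  unfolding PP_def AA_def by simp

lemma PP_Suc_n: "PP t u (Suc n) m = PP t u n m * ((real n + 1 + t) / (real n + 1 + real m - u))"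
  unfolding PP_def by (simp add: add_ac)

lemma PP_Suc_m:
  assumes "u < 1"
  shows "PP t u n (Suc m) = PP t u n m * ((real m + 1 - u) / (real n + real m + 1 - u))"
proof (induction n)
  case 0
  have "real m + 1 - u \<noteq> 0" using assms by linarith
  then show ?case by (simp add: PP_def)
next
  case (Suc n)
  have "PP t u (Suc n) (Suc m) = PP t u n (Suc m) * ((real n + 1 + t) / (real n + 1 + real (Suc m) - u))"
    by (rule PP_Suc_n)
  also have "\<dots> = PP t u n m * ((real m + 1 - u) / (real n + real m + 1 - u)) * ((real n + 1 + t) / (real n + 1 + real (Suc m) - u))"
    using Suc by simp
  also have "\<dots> = PP t u (Suc n) m * ((real m + 1 - u) / (real (Suc n) + real m + 1 - u))"
  proof -
    have d1: "real n + 1 + real (Suc m) - u = real (Suc n) + real m + 1 - u" by simp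
    have d2: "real n + real m + 1 - u = real n + 1 + real m - u" by simp
    show ?thesis unfolding PP_Suc_n d1 d2 by (simp only: divide_inverse mult_ac)
  qed
  finally show ?case .
qed

lemma nat_ne_frac:
  assumes "real k < x" "x < real k + 1"
  shows "real m \<noteq> x"
proof
  assume "real m = x"
  then have "real k < real m" "real m < real (k + 1)" using assms by auto
  then have "k < m" "m < k + 1" by (simp_all only: of_nat_less_iff)
  then show False by simp
qed

lemma aa_key:
  assumes t: "0 \<le> t" and u: "0 < u" and tu: "t + u < 1"
  shows "aa t u n m - aa t u n (Suc m) = PP t u n m * ss t u m - PP t u (Suc n) m * ss t u m"
proof -
  define a where "a = real m - u"
  define P where "P = real n + 1"
  define Q where "Q = real n + 2"
  define R where "R = real n + real m + 1 - u"
  define p where "p = -u/a + -u*(1+u)/((a - 1)*a)"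
  have u1: "u < 1" using t tu by linarith
  have a0: "a \<noteq> 0" unfolding a_def using nat_ne_frac[of 0 u m] u u1 by auto
  have a1: "a - 1 \<noteq> 0" unfolding a_def using nat_ne_frac[of 1 "1+u" m] u u1 by auto
  have at: "a - t \<noteq> 0" unfolding a_def using nat_ne_frac[of 0 "u+t" m] u t tu by auto
  have ap: "a + 1 \<noteq> 0" unfolding a_def using u1 by (smt (verit) of_nat_0_le_iff)
  have P0: "P \<noteq> 0" and Q0: "Q \<noteq> 0" unfolding P_def Q_def by (smt (verit) of_nat_0_le_iff)+
  have R0: "R \<noteq> 0" unfolding R_def using u1 by (smt (verit) of_nat_0_le_iff)
  have RP: "R = P + a" and RQ: "R = Q + (a - 1)" unfolding R_def P_def Q_def a_def by simp_all
  have wm: "ww u n m * R = p + (-u)/P + (-u*(1+u)/a)/Q"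
  proof -
    have "ww u n m = -u/a/P + -u*(1+u)/((a-1)*a)/Q"
      unfolding ww_def a_def P_def Q_def by (simp add: algebra_simps)
    then have "ww u n m * R = (-u/a/P) * R + (-u*(1+u)/((a-1)*a)/Q) * R"
      by (simp only: distrib_right)
    also have "\<dots> = (-u/a/P) * (P + a) + (-u*(1+u)/((a-1)*a)/Q) * (Q + (a - 1))"
      by (simp only: flip: RP RQ)
    also have "\<dots> = p + (-u)/P + (-u*(1+u)/a)/Q"
      unfolding s1a[OF a0 P0] s1b[OF a0 a1 Q0] p_def by simp
    finally show ?thesis .
  qed
  have wm1: "ww u n (Suc m) * (a + 1) = (-u)/P + (-u*(1+u)/a)/Q"
  proof -
    have "ww u n (Suc m) = -u/(a+1)/P + -u*(1+u)/(a*(a+1))/Q"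
      unfolding ww_def a_def P_def Q_def by (simp add: algebra_simps)
    then show ?thesis using s2[OF a0 ap P0 Q0, of u] by simp
  qed
  have pss: "p = ss t u m * (a - t)"
  proof -
    have "ss t u m = -u*(a+u)/((a-1)*a*(a-t))" unfolding ss_def a_def by (simp add: algebra_simps)
    then show ?thesis unfolding p_def using s3[OF a0 a1 at, of u] by simp
  qed
  have PPm: "PP t u n (Suc m) = PP t u n m * ((a + 1) / R)"
    unfolding PP_Suc_m[OF u1] a_def R_def by (simp add: algebra_simps)
  have PPn: "PP t u (Suc n) m = PP t u n m * ((R - (a - t)) / R)"
    unfolding PP_Suc_n a_def R_def by (simp add: algebra_simps)
  have "aa t u n m - aa t u n (Suc m) = PP t u n m * ((ww u n m * R - ww u n (Suc m) * (a + 1)) / R)"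
    unfolding aa_def PPm using R0 by (simp add: field_simps)
  also have "\<dots> = PP t u n m * (p / R)" unfolding wm wm1 by simp
  also have "\<dots> = PP t u n m * ss t u m - PP t u (Suc n) m * ss t u m"
    unfolding PPn pss using R0 by (simp add: field_simps)
  finally show ?thesis .
qed

lemma alg2:
  fixes a b c t u :: real
  assumes "a \<noteq> 0" "b \<noteq> 0" "c \<noteq> 0" "b = a + 1" "c = a + 1 - t"
  shows "u*(t+u)*(1/(b*c)) = (1-t)*(-u*(a+1+u)/(a*b*c)) + u*(1+u)*(1/a - 1/b)"
  using assms(1,2,3) apply (simp add: field_simps)
  apply (simp add: algebra_simps assms(4,5))
  done

lemma ineq1:
  fixes N t u :: real
  assumes "N \<ge> 0" "0 \<le> t" "t \<le> 1/4" "0 \<le> u" "u \<le> 1/4"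
  shows "(N+1+t)/(N+1-u) \<le> (4*N+5)/(4*N+3)"
proof -
  have h1: "t*(4*N+3) \<le> (1/4)*(4*N+3)" using assms by (intro mult_right_mono) auto
  have h2: "u*(4*N+5) \<le> (1/4)*(4*N+5)" using assms by (intro mult_right_mono) auto
  have e1: "(N+1+t)*(4*N+3) = (N+1)*(4*N+3) + t*(4*N+3)" by (simp add: algebra_simps)
  have e2: "(4*N+5)*(N+1-u) = (4*N+5)*(N+1) - u*(4*N+5)" by (simp add: algebra_simps)
  have e3: "(N+1)*(4*N+3) + (1/4)*(4*N+3) = (4*N+5)*(N+1) - (1/4)*(4*N+5)" by (simp add: algebra_simps)
  have "(N+1+t)*(4*N+3) \<le> (4*N+5)*(N+1-u)" unfolding e1 e2 using h1 h2 e3 by linarith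
  then show ?thesis using assms by (simp add: divide_simps)
qed

lemma ineq2:
  fixes N t u :: real
  assumes "N \<ge> 0" "0 \<le> t" "0 \<le> u" "u \<le> 1/4"
  shows "(N + 1 + t) / (N + 2 - u) \<le> ((N + 1 + t) / (N + 1 - u)) * ((N + 1) / (N + 2))"
proof -
  have "u*(N+1) \<le> u*(N+2)" using assms by (intro mult_left_mono) auto
  then have "(N+1-u)*(N+2) \<le> (N+1)*(N+2-u)" by (simp add: algebra_simps)
  then have "1/(N+2-u) \<le> (N+1)/((N+1-u)*(N+2))" using assms by (simp add: divide_simps)
  then have "(N+1+t) * (1/(N+2-u)) \<le> (N+1+t) * ((N+1)/((N+1-u)*(N+2)))"
    using assms by (intro mult_left_mono) auto
  then show ?thesis by simp
qed

lemma cancel_aux: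
  fixes N A t u :: real
  assumes "N \<ge> 0" "u < 1"
  shows "(A/(N+1))*((N+1+t)/(N+1-u)*((N+1)/(N+2))) = A*((N+1+t)/(N+1-u))/(N+1+1)"
proof -
  have n: "N + 1 \<noteq> 0" "N + 2 \<noteq> 0" using assms by auto
  have g: "(A/(N+1))*(X*((N+1)/(N+2))) = A*X/(N+1+1)" for X
    using n by simp
  show ?thesis by (rule g)
qed

lemma sqrt4: "sqrt (4 * x) = 2 * sqrt x"
  by (subst real_sqrt_mult) simp

lemma powr_aux1: "(x::real) > 0 \<Longrightarrow> 2 * x powr (1/2) / x = 2 * x powr (-1/2)"
proof -
  assume x: "x > 0"
  have "x powr (1/2) / x = x powr (1/2) / x powr 1" using x by simp
  also have "\<dots> = x powr (1/2 - 1)" by (rule powr_diff[symmetric])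
  finally show ?thesis by simp
qed

lemma powr_aux2: "(x::real) > 0 \<Longrightarrow> 2 * x powr (1/2) / x^2 = 2 * x powr (-3/2)"
proof -
  assume x: "x > 0"
  have "x powr (1/2) / x^2 = x powr (1/2) / x powr 2" using x by (simp add: powr_numeral)
  also have "\<dots> = x powr (1/2 - 2)" by (rule powr_diff[symmetric])
  finally show ?thesis by simp
qed

context
  fixes t u :: real
  assumes t0: "0 \<le> t" and t1: "t \<le> 1/4" and u0: "0 < u" and u1: "u \<le> 1/4"
begin

lemma AA_Suc: "AA t u (Suc n) = AA t u n * ((real n + 1 + t) / (real n + 1 - u))"
  unfolding AA_def by (simp add: add_ac)

lemma AA_pos: "AA t u n > 0"
  unfolding AA_def using t0 u1 by (intro prod_pos) (auto simp: field_simps)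

lemma AA_sq: "(AA t u n)^2 \<le> 4 * real n + 1"
proof (induction n)
  case 0 then show ?case by (simp add: AA_def)
next
  case (Suc n)
  define r where "r = (real n + 1 + t) / (real n + 1 - u)"
  have r0: "0 \<le> r" unfolding r_def using t0 u1 by (auto intro!: divide_nonneg_pos)
  have "r \<le> (4 * real n + 5) / (4 * real n + 3)"
    unfolding r_def using ineq1[of "real n" t u] t0 t1 u0 u1 by simp
  then have r2: "r^2 \<le> ((4 * real n + 5) / (4 * real n + 3))^2"
    using r0 by (intro power_mono) auto
  have "(AA t u (Suc n))^2 = (AA t u n)^2 * r^2"
    by (simp only: AA_Suc r_def power_mult_distrib)
  also have "\<dots> \<le> (4 * real n + 1) * ((4 * real n + 5) / (4 * real n + 3))^2"
    using Suc r2 by (intro mult_mono) auto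
  also have "\<dots> \<le> 4 * real (Suc n) + 1"
    by (simp add: power_divide divide_simps) (simp add: algebra_simps power2_eq_square)
  finally show ?case .
qed

lemma AA_le: "AA t u n \<le> 2 * (real n + 1) powr (1/2)"
proof -
  have "(AA t u n)^2 \<le> 4 * (real n + 1)" using AA_sq[of n] by simp
  then have "AA t u n \<le> sqrt (4 * (real n + 1))" by (rule real_le_rsqrt)
  also have "\<dots> = 2 * sqrt (real n + 1)" by (rule sqrt4)
  also have "\<dots> = 2 * (real n + 1) powr (1/2)"
    by (simp add: powr_half_sqrt)
  finally show ?thesis .
qed

lemma PP_pos: "PP t u n m > 0"
  unfolding PP_def using t0 u1 by (intro prod_pos) (auto intro!: divide_pos_pos)

lemma PP_mono: "m' \<le> m \<Longrightarrow> PP t u n m \<le> PP t u n m'"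
  unfolding PP_def using t0 u1
  by (intro prod_mono) (auto intro!: divide_nonneg_pos divide_left_mono mult_pos_pos)

lemma PP_le_AA: "PP t u n m \<le> AA t u n"
  using PP_mono[of 0 m n] by (simp add: PP_0m)

lemma PP_1: "PP t u n 1 \<le> AA t u n / (real n + 1)"
proof (induction n)
  case 0 then show ?case by (simp add: PP_def AA_def)
next
  case (Suc n)
  have f: "(real n + 1 + t) / (real n + 2 - u) \<le> ((real n + 1 + t) / (real n + 1 - u)) * ((real n + 1) / (real n + 2))"
    using ineq2[of "real n" t u] t0 u0 u1 by simp
  have "PP t u (Suc n) 1 = PP t u n 1 * ((real n + 1 + t) / (real n + 2 - u))"
    unfolding PP_Suc_n by (simp add: add_ac)
  also have "\<dots> \<le> (AA t u n / (real n + 1)) * (((real n + 1 + t) / (real n + 1 - u)) * ((real n + 1) / (real n + 2)))"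
    using Suc f PP_pos[of n 1] t0 u1 by (intro mult_mono) auto
  also have "\<dots> = AA t u (Suc n) / (real (Suc n) + 1)"
    unfolding AA_Suc using cancel_aux[of "real n" u "AA t u n" t] u1 by simp
  finally show ?case .
qed

lemma PP_le_div: "1 \<le> m \<Longrightarrow> PP t u n m \<le> AA t u n / (real n + 1)"
  using PP_mono[of 1 m n] PP_1[of n] by linarith

lemma summable_AA: "summable (\<lambda>n. AA t u n / (real n + 1)^2)"
proof (rule summable_comparison_test'[where N = 0])
  have "summable (\<lambda>n. real n powr (-3/2))" by (simp add: summable_real_powr_iff)
  then have "summable (\<lambda>n. real (Suc n) powr (-3/2))" by (subst summable_Suc_iff)
  then show "summable (\<lambda>n. 2 * real (Suc n) powr (-3/2))" by (rule summable_mult)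
  fix n :: nat
  have "norm (AA t u n / (real n + 1)^2) = AA t u n / (real n + 1)^2"
    using AA_pos[of n] by simp
  also have "\<dots> \<le> 2 * (real n + 1) powr (1/2) / (real n + 1)^2"
    by (intro divide_right_mono AA_le) simp
  also have "\<dots> = 2 * real (Suc n) powr (-3/2)"
    using powr_aux2[of "real n + 1"] by (simp add: add_ac)
  finally show "norm (AA t u n / (real n + 1)^2) \<le> 2 * real (Suc n) powr (-3/2)" .
qed

lemma AA_div_lim: "(\<lambda>n. AA t u n / (real n + 1)) \<longlonglongrightarrow> 0"
proof (rule tendsto_sandwich[where f = "\<lambda>_. 0" and h = "\<lambda>n. 2 * (real n + 1) powr (-1/2)"])
  show "eventually (\<lambda>n. 0 \<le> AA t u n / (real n + 1)) sequentially"
    using AA_pos by (auto intro!: always_eventually less_imp_le)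
  show "eventually (\<lambda>n. AA t u n / (real n + 1) \<le> 2 * (real n + 1) powr (-1/2)) sequentially"
  proof (intro always_eventually allI)
    fix n
    have "AA t u n / (real n + 1) \<le> 2 * (real n + 1) powr (1/2) / (real n + 1)"
      by (intro divide_right_mono AA_le) simp
    also have "\<dots> = 2 * (real n + 1) powr (-1/2)"
      using powr_aux1[of "real n + 1"] by simp
    finally show "AA t u n / (real n + 1) \<le> 2 * (real n + 1) powr (-1/2)" .
  qed
  have "((\<lambda>n. (real n + 1) powr (-1/2)) \<longlongrightarrow> 0) sequentially"
  proof (rule tendsto_neg_powr)
    show "filterlim (\<lambda>n. real n + 1) at_top sequentially"
      using filterlim_tendsto_add_at_top[OF tendsto_const filterlim_real_sequentially, of 1]
      by (simp add: add.commute)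
  qed simp
  then show "(\<lambda>n. 2 * (real n + 1) powr (-1/2)) \<longlonglongrightarrow> 0"
    using tendsto_mult_right_zero by blast
qed simp


lemma u_lt1: "u < 1" using u1 by simp

lemma ww_0: "ww u n 0 = 1 / ((real n + 1) * (real n + 2))"
proof -
  have "-u/(0 - u) = 1" using u0 by simp
  moreover have "-u*(1+u)/((0 - 1 - u)*(0 - u)) = -1"
  proof -
    have e: "(0 - 1 - u)*(0 - u) = u*(1+u)" by (simp add: algebra_simps)
    have "u*(1+u) \<noteq> 0" using u0 by (simp add: add_pos_pos)
    then show ?thesis unfolding e by simp
  qed
  ultimately show ?thesis unfolding ww_def by (simp add: field_simps)
qed

definition Bm :: "nat \<Rightarrow> real" where
  "Bm m = \<bar>-u/(real m - u)\<bar> + \<bar>-u*(1+u)/((real m - 1 - u)*(real m - u))\<bar>"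

lemma aa_bound: "\<bar>aa t u n m\<bar> \<le> (if m = 0 then 1 else Bm m) * (AA t u n / (real n + 1)^2)"
proof (cases "m = 0")
  case True
  have "aa t u n 0 = AA t u n / ((real n + 1) * (real n + 2))"
    unfolding aa_def ww_0 PP_0m by simp
  also have "\<dots> \<le> AA t u n / (real n + 1)^2"
    using AA_pos[of n] by (intro divide_left_mono) (auto simp: power2_eq_square intro!: mult_pos_pos)
  finally show ?thesis using True AA_pos[of n] by (simp add: aa_def ww_0 PP_0m)
next
  case False
  have w: "\<bar>ww u n m\<bar> \<le> Bm m / (real n + 1)"
  proof -
    have "\<bar>ww u n m\<bar> \<le> \<bar>-u/(real m - u)\<bar> / (real n + 1) + \<bar>-u*(1+u)/((real m - 1 - u)*(real m - u))\<bar> / (real n + 2)"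
      unfolding ww_def by (rule order_trans[OF abs_triangle_ineq]) (simp add: abs_divide abs_mult)
    also have "\<dots> \<le> \<bar>-u/(real m - u)\<bar> / (real n + 1) + \<bar>-u*(1+u)/((real m - 1 - u)*(real m - u))\<bar> / (real n + 1)"
      by (intro add_left_mono divide_left_mono) auto
    also have "\<dots> = Bm m / (real n + 1)" unfolding Bm_def by (simp add: add_divide_distrib)
    finally show ?thesis .
  qed
  have "\<bar>aa t u n m\<bar> = PP t u n m * \<bar>ww u n m\<bar>"
    unfolding aa_def using PP_pos[of n m] by (simp add: abs_mult)
  also have "\<dots> \<le> (AA t u n / (real n + 1)) * (Bm m / (real n + 1))"
    using PP_le_div[of m n] False w PP_pos[of n m] by (intro mult_mono) auto
  also have "\<dots> = Bm m * (AA t u n / (real n + 1)^2)" by (simp add: power2_eq_square)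
  finally show ?thesis using False by simp
qed

lemma aa_summable: "summable (\<lambda>n. aa t u n m)"
  by (rule summable_comparison_test'[OF summable_mult[OF summable_AA, of "if m = 0 then 1 else Bm m"], of 0])
     (use aa_bound in simp)

lemma PPss_lim: "(\<lambda>n. PP t u n m * ss t u m) \<longlonglongrightarrow> 0"
proof (cases "m = 0")
  case True then show ?thesis by (simp add: ss_def)
next
  case False
  have "(\<lambda>n. PP t u n m) \<longlonglongrightarrow> 0"
  proof (rule tendsto_sandwich[where f = "\<lambda>_. 0" and h = "\<lambda>n. AA t u n / (real n + 1)"])
    show "eventually (\<lambda>n. 0 \<le> PP t u n m) sequentially"
      using PP_pos by (auto intro!: always_eventually less_imp_le)
    show "eventually (\<lambda>n. PP t u n m \<le> AA t u n / (real n + 1)) sequentially"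
      using PP_le_div[of m] False by (auto intro!: always_eventually)
  qed (simp_all add: AA_div_lim)
  then show ?thesis using tendsto_mult_left_zero by blast
qed

definition Lm :: "nat \<Rightarrow> real" where "Lm m = (\<Sum>n. aa t u n m)"

lemma Lm_diff: "Lm m - Lm (Suc m) = ss t u m"
proof -
  have "(\<lambda>n. aa t u n m - aa t u n (Suc m)) sums (Lm m - Lm (Suc m))"
    unfolding Lm_def by (intro sums_diff summable_sums aa_summable)
  moreover have "(\<lambda>n. aa t u n m - aa t u n (Suc m)) sums ss t u m"
  proof -
    have "(\<lambda>n. PP t u n m * ss t u m - PP t u (Suc n) m * ss t u m) sums (PP t u 0 m * ss t u m - 0)"
      by (rule telescope_sums'[OF PPss_lim])
    then show ?thesis using aa_key[OF t0 u0] t1 u1 by (simp add: PP_def)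
  qed
  ultimately show ?thesis by (rule sums_unique2)
qed

lemma Bm_lim: "Bm \<longlonglongrightarrow> 0"
proof -
  have f1: "filterlim (\<lambda>m. real m - u) at_infinity sequentially"
  proof (rule filterlim_at_top_imp_at_infinity)
    show "filterlim (\<lambda>m. real m - u) at_top sequentially"
      using filterlim_tendsto_add_at_top[OF tendsto_const filterlim_real_sequentially, of "-u"] by simp
  qed
  have f2: "filterlim (\<lambda>m. (real m - 1 - u) * (real m - u)) at_infinity sequentially"
  proof (rule filterlim_at_top_imp_at_infinity)
    have a: "filterlim (\<lambda>m. real m - u) at_top sequentially"
      using filterlim_tendsto_add_at_top[OF tendsto_const filterlim_real_sequentially, of "-u"] by simp
    have e: "(\<lambda>m. real m - 1 - u) = (\<lambda>m. (-1-u) + real m)" by (auto simp: fun_eq_iff)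
    have b: "filterlim (\<lambda>m. real m - 1 - u) at_top sequentially"
      unfolding e by (rule filterlim_tendsto_add_at_top[OF tendsto_const filterlim_real_sequentially])
    show "filterlim (\<lambda>m. (real m - 1 - u) * (real m - u)) at_top sequentially"
      by (rule filterlim_at_top_mult_at_top[OF b a])
  qed
  have "(\<lambda>m. -u/(real m - u)) \<longlonglongrightarrow> 0" by (rule tendsto_divide_0[OF tendsto_const f1])
  moreover have "(\<lambda>m. -u*(1+u)/((real m - 1 - u)*(real m - u))) \<longlonglongrightarrow> 0"
    by (rule tendsto_divide_0[OF tendsto_const f2])
  ultimately have "(\<lambda>m. \<bar>-u/(real m - u)\<bar> + \<bar>-u*(1+u)/((real m - 1 - u)*(real m - u))\<bar>) \<longlonglongrightarrow> \<bar>0\<bar> + \<bar>0\<bar>"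
    by (intro tendsto_add tendsto_rabs)
  then show ?thesis unfolding Bm_def[abs_def] by simp
qed

lemma Lm_lim: "Lm \<longlonglongrightarrow> 0"
proof -
  define C where "C = (\<Sum>n. AA t u n / (real n + 1)^2)"
  have bnd: "\<bar>Lm m\<bar> \<le> Bm m * C" if "m \<ge> 1" for m
  proof -
    have "\<bar>Lm m\<bar> \<le> (\<Sum>n. \<bar>aa t u n m\<bar>)"
      unfolding Lm_def by (rule summable_rabs) (rule summable_comparison_test'[OF summable_mult[OF summable_AA, of "if m = 0 then 1 else Bm m"], of 0]; use aa_bound in simp)
    also have "\<dots> \<le> (\<Sum>n. Bm m * (AA t u n / (real n + 1)^2))"
    proof (rule suminf_le)
      show "\<And>n. \<bar>aa t u n m\<bar> \<le> Bm m * (AA t u n / (real n + 1)^2)" using aa_bound[of _ m] that by simp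
      show "summable (\<lambda>n. \<bar>aa t u n m\<bar>)"
        by (rule summable_comparison_test'[OF summable_mult[OF summable_AA, of "if m = 0 then 1 else Bm m"], of 0]) (use aa_bound in simp)
      show "summable (\<lambda>n. Bm m * (AA t u n / (real n + 1)^2))" by (rule summable_mult[OF summable_AA])
    qed
    also have "\<dots> = Bm m * C" unfolding C_def by (rule suminf_mult[OF summable_AA])
    finally show ?thesis .
  qed
  have "(\<lambda>m. Bm m * C) \<longlonglongrightarrow> 0 * C" by (intro tendsto_mult Bm_lim tendsto_const)
  then have "(\<lambda>m. Bm m * C) \<longlonglongrightarrow> 0" by simp
  then show ?thesis
    by (rule Lim_null_comparison[rotated]) (use bnd in \<open>auto simp: eventually_sequentially\<close>)
qed

lemma ss_sums: "(\<lambda>m. ss t u m) sums Lm 0"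
proof -
  have "(\<lambda>m. Lm m - Lm (Suc m)) sums (Lm 0 - 0)" by (rule telescope_sums'[OF Lm_lim])
  then show ?thesis using Lm_diff by simp
qed

lemma Lm0: "Lm 0 = (\<Sum>n. AA t u n / ((real n + 1) * (real n + 2)))"
  unfolding Lm_def aa_def ww_0 PP_0m by simp


lemma AA_sums_closed:
  "summable (\<lambda>m. 1/((real m + 1 - u)*(real m + 1 - u - t)))"
  "(\<lambda>n. AA t u n / ((real n + 1) * (real n + 2))) sums
     ((1 + u + u*(t+u)*(\<Sum>m. 1/((real m + 1 - u)*(real m + 1 - u - t)))) / (1 - t))"
proof -
  define X where "X = (\<lambda>m::nat. 1/((real m + 1 - u)*(real m + 1 - u - t)))"
  define L0 where "L0 = Lm 0"
  have sL: "(\<lambda>n. AA t u n / ((real n + 1) * (real n + 2))) sums L0"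
  proof -
    have "summable (\<lambda>n. aa t u n 0)" by (rule aa_summable)
    then have "summable (\<lambda>n. AA t u n / ((real n + 1) * (real n + 2)))"
      unfolding aa_def ww_0 PP_0m by simp
    then show ?thesis unfolding L0_def Lm0 by (rule summable_sums)
  qed
  have s1: "(\<lambda>m. ss t u (Suc m)) sums L0"
  proof -
    have "ss t u 0 = 0" by (simp add: ss_def)
    then show ?thesis using sums_Suc_iff[of "ss t u" L0] ss_sums unfolding L0_def by simp
  qed
  have s2: "(\<lambda>m. 1/(real m - u) - 1/(real (Suc m) - u)) sums (1/(real 0 - u) - 0)"
  proof (rule telescope_sums')
    have f1: "filterlim (\<lambda>m. real m - u) at_infinity sequentially"
    proof (rule filterlim_at_top_imp_at_infinity)
      show "filterlim (\<lambda>m. real m - u) at_top sequentially"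
        using filterlim_tendsto_add_at_top[OF tendsto_const filterlim_real_sequentially, of "-u"] by simp
    qed
    show "(\<lambda>m. 1/(real m - u)) \<longlonglongrightarrow> 0" by (rule tendsto_divide_0[OF tendsto_const f1])
  qed
  have eq: "u*(t+u)*X m = (1-t) * ss t u (Suc m) + u*(1+u)*(1/(real m - u) - 1/(real (Suc m) - u))" for m
  proof -
    have a0: "real m - u \<noteq> 0" using nat_ne_frac[of 0 u m] u0 u1 by auto
    have m0: "real m \<ge> 0" by simp
    have b0: "real m - u + 1 \<noteq> 0" using u1 m0 by linarith
    have c0: "real m - u + 1 - t \<noteq> 0" using u1 t1 m0 by linarith
    have "u*(t+u)*(1/((real m - u + 1)*(real m - u + 1 - t))) =
      (1-t)*(-u*((real m - u)+1+u)/((real m - u)*(real m - u + 1)*(real m - u + 1 - t))) + u*(1+u)*(1/(real m - u) - 1/(real m - u + 1))"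
      by (rule alg2[OF a0 b0 c0]) simp_all
    then show ?thesis unfolding X_def ss_def by (simp add: algebra_simps)
  qed
  have A: "(\<lambda>m. (1-t) * ss t u (Suc m) + u*(1+u)*(1/(real m - u) - 1/(real (Suc m) - u)))
     sums ((1-t) * L0 + u*(1+u)*(1/(real 0 - u) - 0))"
    by (intro sums_add sums_mult s1 s2)
  have val: "(1-t) * L0 + u*(1+u)*(1/(real 0 - u) - 0) = (1-t) * L0 - (1 + u)"
    using u0 by (simp add: field_simps)
  have fe: "(\<lambda>m. u*(t+u)*X m) = (\<lambda>m. (1-t) * ss t u (Suc m) + u*(1+u)*(1/(real m - u) - 1/(real (Suc m) - u)))"
    by (rule ext) (rule eq)
  have sX: "(\<lambda>m. u*(t+u)*X m) sums ((1-t) * L0 - (1 + u))"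
    using A unfolding val fe[symmetric] .
  have nz: "u*(t+u) \<noteq> 0" using u0 t0 by simp
  have sX1: "(\<lambda>m. u*(t+u)*X m * (1/(u*(t+u)))) sums (((1-t) * L0 - (1 + u)) * (1/(u*(t+u))))"
    by (rule sums_mult2[OF sX])
  have fe2: "(\<lambda>m. u*(t+u)*X m * (1/(u*(t+u)))) = X" using nz by (auto simp: fun_eq_iff)
  have sX2: "X sums (((1-t) * L0 - (1 + u)) * (1/(u*(t+u))))"
    using sX1 unfolding fe2 .
  then show "summable (\<lambda>m. 1/((real m + 1 - u)*(real m + 1 - u - t)))" unfolding X_def by (simp add: sums_iff)
  have "(\<Sum>m. 1/((real m + 1 - u)*(real m + 1 - u - t))) = ((1-t) * L0 - (1 + u)) * (1/(u*(t+u)))"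
    using sX2 unfolding X_def by (simp add: sums_iff)
  then have "(1 + u + u*(t+u)*(\<Sum>m. 1/((real m + 1 - u)*(real m + 1 - u - t)))) / (1 - t) = L0"
    using nz t1 by (simp add: field_simps)
  then show "(\<lambda>n. AA t u n / ((real n + 1) * (real n + 2))) sums
     ((1 + u + u*(t+u)*(\<Sum>m. 1/((real m + 1 - u)*(real m + 1 - u - t)))) / (1 - t))"
    using sL by simp
qed

end


lemma EE_nonneg: "EE k n \<ge> 0"
  by (induction k n rule: EE.induct) auto

lemma HH_nonneg: "HH k n \<ge> 0"
  by (induction k n rule: HH.induct) auto

lemma EE_gt: "n < k \<Longrightarrow> EE k n = 0"
proof (induction n arbitrary: k)
  case 0 then show ?case by (cases k) auto
next
  case (Suc n)
  then obtain k' where k: "k = Suc k'" by (cases k) auto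
  then show ?case using Suc by simp
qed

lemma EE_sums: "(\<lambda>k. EE k n * z^k) sums (\<Prod>j=1..n. 1 + z / real j)"
proof (induction n)
  case 0
  have "(\<lambda>k. EE k 0 * z^k) sums (\<Sum>k\<in>{0}. EE k 0 * z^k)"
    by (rule sums_finite) (auto simp: EE_0n)
  then show ?case by simp
next
  case (Suc n)
  define P where "P = (\<Prod>j=1..n. 1 + z / real j)"
  have sh: "(\<lambda>k. if k = 0 then 0 else EE (k - 1) n * z^(k - 1) * (z / real (Suc n))) sums (P * (z / real (Suc n)))"
  proof -
    have "(\<lambda>k. EE k n * z^k * (z / real (Suc n))) sums (P * (z / real (Suc n)))"
      using sums_mult2[OF Suc.IH[folded P_def]] .
    then have "(\<lambda>k. (\<lambda>k. if k = 0 then 0 else EE (k - 1) n * z^(k - 1) * (z / real (Suc n))) (Suc k)) sums (P * (z / real (Suc n)))"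
      by simp
    from sums_Suc_iff[THEN iffD1, OF this] show ?thesis by simp
  qed
  have "(\<lambda>k. EE k n * z^k + (if k = 0 then 0 else EE (k - 1) n * z^(k - 1) * (z / real (Suc n)))) sums (P + P * (z / real (Suc n)))"
    by (rule sums_add[OF Suc.IH[folded P_def] sh])
  moreover have "EE k n * z^k + (if k = 0 then 0 else EE (k - 1) n * z^(k - 1) * (z / real (Suc n))) = EE k (Suc n) * z^k" for k
  proof (cases k)
    case 0 then show ?thesis by simp
  next
    case (Suc k')
    then show ?thesis by (simp add: field_simps)
  qed
  moreover have "P + P * (z / real (Suc n)) = (\<Prod>j=1..Suc n. 1 + z / real j)"
    unfolding P_def by (simp add: algebra_simps)
  ultimately show ?case by simp
qed

lemma HH_conv: "HH l (Suc n) = (\<Sum>i\<le>l. (1 / real (Suc n))^i * HH (l - i) n)"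
proof (induction l)
  case 0 then show ?case by simp
next
  case (Suc l)
  have "HH (Suc l) (Suc n) = HH (Suc l) n + (1 / real (Suc n)) * HH l (Suc n)" by simp
  also have "\<dots> = HH (Suc l) n + (\<Sum>i\<le>l. (1 / real (Suc n))^(Suc i) * HH (Suc l - Suc i) n)"
    unfolding Suc sum_distrib_left by (simp add: mult.assoc)
  also have "\<dots> = (\<Sum>i\<le>Suc l. (1 / real (Suc n))^i * HH (Suc l - i) n)"
    by (subst sum.atMost_Suc_shift) simp
  finally show ?case .
qed

lemma HH_sums:
  assumes z: "0 \<le> z" "z < 1"
  shows "(\<lambda>l. HH l n * z^l) sums (\<Prod>j=1..n. 1 / (1 - z / real j))"
proof (induction n)
  case 0
  have "(\<lambda>l. HH l 0 * z^l) sums (\<Sum>l\<in>{0}. HH l 0 * z^l)"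
    by (rule sums_finite) (auto simp: HH_0n)
  then show ?case by simp
next
  case (Suc n)
  define q where "q = z / real (Suc n)"
  have q: "0 \<le> q" "q < 1" unfolding q_def using z by (auto simp: divide_simps)
  have ga: "summable (\<lambda>i. norm (q^i))" using q by (simp add: summable_geometric)
  have gb: "summable (\<lambda>l. norm (HH l n * z^l))"
    using Suc.IH z HH_nonneg by (simp add: sums_iff)
  have "(\<lambda>l. \<Sum>i\<le>l. q^i * (HH (l - i) n * z^(l - i))) sums ((\<Sum>i. q^i) * (\<Sum>l. HH l n * z^l))"
    by (rule Cauchy_product_sums[OF ga gb])
  moreover have "(\<Sum>i\<le>l. q^i * (HH (l - i) n * z^(l - i))) = HH l (Suc n) * z^l" for l
  proof -
    have "(\<Sum>i\<le>l. q^i * (HH (l - i) n * z^(l - i))) = (\<Sum>i\<le>l. ((1 / real (Suc n))^i * HH (l - i) n) * z^l)"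
    proof (rule sum.cong[OF refl])
      fix i assume "i \<in> {..l}"
      then have "z^l = z^i * z^(l-i)" by (simp add: power_add[symmetric])
      then show "q^i * (HH (l - i) n * z^(l - i)) = ((1 / real (Suc n))^i * HH (l - i) n) * z^l"
        unfolding q_def by (simp add: power_divide field_simps)
    qed
    also have "\<dots> = HH l (Suc n) * z^l" unfolding HH_conv sum_distrib_right ..
    finally show ?thesis .
  qed
  moreover have "(\<Sum>i. q^i) = 1 / (1 - z / real (Suc n))"
  proof -
    have "norm q < 1" using q by simp
    then have "(\<Sum>i. q^i) = 1 / (1 - q)" by (rule suminf_geometric)
    then show ?thesis unfolding q_def .
  qed
  moreover have "(\<Sum>l. HH l n * z^l) = (\<Prod>j=1..n. 1 / (1 - z / real j))" using Suc.IH by (simp add: sums_iff)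
  ultimately show ?case by (simp add: mult.commute)
qed

definition DD :: "nat \<Rightarrow> nat \<Rightarrow> real \<Rightarrow> real" where
  "DD s n x = (\<Sum>k\<le>s. EE k n * x^k * HH (s - k) n)"

lemma DD_nonneg: "x \<ge> 0 \<Longrightarrow> DD s n x \<ge> 0"
  unfolding DD_def by (intro sum_nonneg mult_nonneg_nonneg EE_nonneg HH_nonneg) auto

lemma DD_sums:
  assumes x: "0 \<le> x" "x \<le> 1" and la: "0 \<le> la" "la < 1"
  shows "(\<lambda>s. DD s n x * la^s) sums AA (la * x) la n"
proof -
  have sa: "(\<lambda>k. EE k n * (la*x)^k) sums (\<Prod>j=1..n. 1 + (la*x) / real j)" by (rule EE_sums)
  have sb: "(\<lambda>l. HH l n * la^l) sums (\<Prod>j=1..n. 1 / (1 - la / real j))" by (rule HH_sums) (use la in auto)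
  have na: "summable (\<lambda>k. norm (EE k n * (la*x)^k))"
    using sa EE_nonneg x la by (simp add: sums_iff)
  have nb: "summable (\<lambda>l. norm (HH l n * la^l))"
    using sb HH_nonneg la by (simp add: sums_iff)
  have "(\<lambda>s. \<Sum>k\<le>s. EE k n * (la*x)^k * (HH (s - k) n * la^(s - k))) sums
      ((\<Sum>k. EE k n * (la*x)^k) * (\<Sum>l. HH l n * la^l))"
    by (rule Cauchy_product_sums[OF na nb])
  moreover have "(\<Sum>k\<le>s. EE k n * (la*x)^k * (HH (s - k) n * la^(s - k))) = DD s n x * la^s" for s
    unfolding DD_def sum_distrib_right
  proof (rule sum.cong[OF refl])
    fix k assume "k \<in> {..s}"
    then have "la^s = la^k * la^(s-k)" by (simp add: power_add[symmetric])
    then show "EE k n * (la*x)^k * (HH (s - k) n * la^(s - k)) = EE k n * x^k * HH (s - k) n * la^s"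
      by (simp add: power_mult_distrib)
  qed
  moreover have "(\<Sum>k. EE k n * (la*x)^k) * (\<Sum>l. HH l n * la^l) = AA (la * x) la n"
  proof -
    have "(\<Sum>k. EE k n * (la*x)^k) * (\<Sum>l. HH l n * la^l)
        = (\<Prod>j=1..n. 1 + (la*x) / real j) * (\<Prod>j=1..n. 1 / (1 - la / real j))"
      using sa sb by (simp add: sums_iff)
    also have "\<dots> = (\<Prod>j=1..n. (1 + (la*x) / real j) * (1 / (1 - la / real j)))"
      by (rule prod.distrib[symmetric])
    also have "\<dots> = AA (la * x) la n" unfolding AA_def
    proof (rule prod.cong[OF refl])
      fix j assume j: "j \<in> {1..n}"
      then have "real j - la \<noteq> 0" "real j \<noteq> 0" using la by auto
      then show "(1 + (la*x) / real j) * (1 / (1 - la / real j)) = (real j + la * x) / (real j - la)"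
        by (simp add: field_simps)
    qed
    finally show ?thesis .
  qed
  ultimately show ?thesis by simp
qed


definition SS :: "nat \<Rightarrow> nat \<Rightarrow> real" where
  "SS k l = (\<Sum>n. EE k n * HH l n / ((real n + 1) * (real n + 2)))"

definition Sg :: "real \<Rightarrow> real \<Rightarrow> real" where
  "Sg t u = (\<Sum>m. 1/((real m + 1 - u)*(real m + 1 - u - t)))"

definition FF :: "real \<Rightarrow> real \<Rightarrow> real" where
  "FF la x = (1 + la + la*(la*x + la)*Sg (la*x) la) / (1 - la*x)"

definition TL :: "nat \<Rightarrow> real \<Rightarrow> real" where
  "TL s x = (\<Sum>n. DD s n x / ((real n + 1) * (real n + 2)))"

lemma LHS_swap:
  assumes x: "0 \<le> x" "x \<le> 1" and la: "0 < la" "la \<le> 1/4"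
  shows "summable (\<lambda>n. la^s * (DD s n x / ((real n + 1) * (real n + 2))))"
    and "(\<lambda>s. \<Sum>n. la^s * (DD s n x / ((real n + 1) * (real n + 2)))) sums FF la x"
proof -
  have t0: "0 \<le> la * x" using x la by simp
  have "la * x \<le> la * 1" using x la by (intro mult_left_mono) auto
  then have t1: "la * x \<le> 1/4" using la by linarith
  note AS = AA_sums_closed[OF t0 t1 la(1) la(2)]
  have row: "(\<lambda>s. la^s * (DD s n x / ((real n + 1) * (real n + 2)))) sums (AA (la*x) la n / ((real n + 1) * (real n + 2)))" for n
  proof -
    have "(\<lambda>s. DD s n x * la^s / ((real n + 1) * (real n + 2))) sums (AA (la*x) la n / ((real n + 1) * (real n + 2)))"
      by (rule sums_divide[OF DD_sums]) (use x la in auto)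
    then show ?thesis by (simp add: mult.commute)
  qed
  have g: "summable (\<lambda>n. AA (la*x) la n / ((real n + 1) * (real n + 2)))" using AS(2) by (simp add: sums_iff)
  have nn: "0 \<le> la^s * (DD s n x / ((real n + 1) * (real n + 2)))" for s n
    using DD_nonneg[OF x(1)] la by simp
  note sw = nonneg_swap[where f = "\<lambda>n s. la^s * (DD s n x / ((real n + 1) * (real n + 2)))", OF nn row g]
  show "summable (\<lambda>n. la^s * (DD s n x / ((real n + 1) * (real n + 2))))" by (rule sw(1))
  have "(\<Sum>n. AA (la*x) la n / ((real n + 1) * (real n + 2))) = FF la x"
    using AS(2) unfolding FF_def Sg_def by (simp add: sums_iff)
  then show "(\<lambda>s. \<Sum>n. la^s * (DD s n x / ((real n + 1) * (real n + 2)))) sums FF la x"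
    using sw(2) by simp
qed

lemma DD_summable:
  assumes x: "0 \<le> x" "x \<le> 1"
  shows "summable (\<lambda>n. DD s n x / ((real n + 1) * (real n + 2)))"
proof -
  have "summable (\<lambda>n. (1/4::real)^s * (DD s n x / ((real n + 1) * (real n + 2))))"
    by (rule LHS_swap(1)) (use x in auto)
  then show ?thesis by (subst (asm) summable_cmult_iff) simp
qed

lemma LHS_series:
  assumes x: "0 \<le> x" "x \<le> 1" and la: "0 < la" "la \<le> 1/4"
  shows "(\<lambda>s. TL s x * la^s) sums FF la x"
proof -
  have "(\<Sum>n. la^s * (DD s n x / ((real n + 1) * (real n + 2)))) = TL s x * la^s" for s
    unfolding TL_def using suminf_mult[OF DD_summable[OF x, of s], of "la^s"] by (simp add: mult.commute)
  then show ?thesis using LHS_swap(2)[OF x la] by simp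
qed

lemma SS_summable: "summable (\<lambda>n. EE k n * HH l n / ((real n + 1) * (real n + 2)))"
proof (rule summable_comparison_test'[OF DD_summable[of 1 "k + l"], of 0])
  fix n :: nat
  have "EE k n * HH l n = (\<lambda>j. EE j n * 1^j * HH (k + l - j) n) k" by simp
  also have "\<dots> \<le> DD (k + l) n 1"
    unfolding DD_def by (rule member_le_sum) (auto intro: mult_nonneg_nonneg EE_nonneg HH_nonneg)
  finally have "EE k n * HH l n \<le> DD (k + l) n 1" .
  moreover have "EE k n * HH l n \<ge> 0" by (intro mult_nonneg_nonneg EE_nonneg HH_nonneg)
  ultimately show "norm (EE k n * HH l n / ((real n + 1) * (real n + 2))) \<le> DD (k + l) n 1 / ((real n + 1) * (real n + 2))"
    by (simp add: divide_right_mono)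
qed simp_all

lemma TL_eq: "TL s x = (\<Sum>k\<le>s. SS k (s - k) * x^k)"
proof -
  have "TL s x = (\<Sum>n. \<Sum>k\<le>s. x^k * (EE k n * HH (s - k) n / ((real n + 1) * (real n + 2))))"
    unfolding TL_def DD_def sum_divide_distrib by (intro suminf_cong sum.cong) auto
  also have "\<dots> = (\<Sum>k\<le>s. \<Sum>n. x^k * (EE k n * HH (s - k) n / ((real n + 1) * (real n + 2))))"
    by (rule suminf_sum) (intro summable_mult SS_summable)
  also have "\<dots> = (\<Sum>k\<le>s. SS k (s - k) * x^k)"
    unfolding SS_def by (intro sum.cong refl) (subst suminf_mult[OF SS_summable], simp add: mult.commute)
  finally show ?thesis .
qed


fun W :: "nat \<Rightarrow> real \<Rightarrow> real" where
  "W 0 x = 1"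
| "W (Suc 0) x = 1"
| "W (Suc (Suc b)) x = (1 + x) * (\<Sum>j\<le>b. (1 + x)^j) * zeta_nat (b + 2)"

definition TR :: "nat \<Rightarrow> real \<Rightarrow> real" where
  "TR s x = (\<Sum>a\<le>s. x^a * W (s - a) x)"

lemma zeta_summable: "k \<ge> 2 \<Longrightarrow> summable (\<lambda>n. 1 / (real (Suc n))^k)"
proof -
  assume k: "k \<ge> 2"
  have "summable (\<lambda>n. inverse (real n ^ k))" by (rule inverse_power_summable[OF k])
  then have "summable (\<lambda>n. inverse (real (Suc n) ^ k))" by (subst summable_Suc_iff)
  then show ?thesis by (simp add: inverse_eq_divide)
qed

lemma zeta_nonneg: "k \<ge> 2 \<Longrightarrow> zeta_nat k \<ge> 0"
  unfolding zeta_nat_def by (rule suminf_nonneg[OF zeta_summable]) auto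

lemma W_nonneg: "x \<ge> 0 \<Longrightarrow> W b x \<ge> 0"
  by (induction b x rule: W.induct) (auto intro!: mult_nonneg_nonneg sum_nonneg zeta_nonneg)

lemma geo_cauchy:
  fixes p q :: real
  assumes "\<bar>p\<bar> < 1" "\<bar>q\<bar> < 1"
  shows "(\<lambda>s. \<Sum>i\<le>s. p^i * q^(s - i)) sums (1/(1-p) * (1/(1-q)))"
proof -
  have "(\<lambda>s. \<Sum>i\<le>s. p^i * q^(s - i)) sums ((\<Sum>i. p^i) * (\<Sum>i. q^i))"
    by (rule Cauchy_product_sums) (use assms in \<open>simp_all add: summable_geometric abs_mult power_abs\<close>)
  moreover have "(\<Sum>i. p^i) = 1/(1-p)" "(\<Sum>i. q^i) = 1/(1-q)"
    using assms by (simp_all add: suminf_geometric)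
  ultimately show ?thesis by simp
qed

lemma R1:
  assumes x: "0 \<le> x" "x \<le> 1" and la: "0 \<le> la" "la \<le> 1/4"
  shows "(\<lambda>s. la^s * ((\<Sum>j\<le>s. (1+x)^j) * (1 / (real m + 1)^(s+2))))
           sums (1/((real m + 1 - la)*(real m + 1 - la - la*x)))"
proof -
  define M where "M = real m + 1"
  have M: "M \<ge> 1" unfolding M_def by simp
  define p where "p = la * (1 + x) / M"
  define q where "q = la / M"
  have lax: "la * (1 + x) \<le> 1/2"
  proof -
    have "la * (1 + x) \<le> (1/4) * 2" using x la by (intro mult_mono) auto
    then show ?thesis by simp
  qed
  have p: "\<bar>p\<bar> < 1" unfolding p_def using M lax x la by (simp add: abs_divide divide_less_eq)
  have q: "\<bar>q\<bar> < 1" unfolding q_def using M la by (simp add: abs_divide divide_less_eq)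
  have "(\<lambda>s. (\<Sum>i\<le>s. p^i * q^(s - i)) * (1 / M^2)) sums (1/(1-p) * (1/(1-q)) * (1 / M^2))"
    by (rule sums_mult2[OF geo_cauchy[OF p q]])
  moreover have "(\<Sum>i\<le>s. p^i * q^(s - i)) * (1 / M^2) = la^s * ((\<Sum>j\<le>s. (1+x)^j) * (1 / M^(s+2)))" for s
  proof -
    have "(\<Sum>i\<le>s. p^i * q^(s - i)) = (\<Sum>i\<le>s. la^s * (1+x)^i / M^s)"
    proof (rule sum.cong[OF refl])
      fix i assume "i \<in> {..s}"
      then have i: "i \<le> s" by simp
      have "la^s = la^i * la^(s-i)" "M^s = M^i * M^(s-i)" using i by (simp_all add: power_add[symmetric])
      then show "p^i * q^(s - i) = la^s * (1+x)^i / M^s"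
        unfolding p_def q_def by (simp add: power_divide power_mult_distrib)
    qed
    also have "\<dots> = la^s * (\<Sum>j\<le>s. (1+x)^j) / M^s"
      by (simp add: sum_distrib_left sum_divide_distrib)
    finally show ?thesis using M by (simp add: power_add field_simps power2_eq_square)
  qed
  moreover have "1/(1-p) * (1/(1-q)) * (1 / M^2) = 1/((real m + 1 - la)*(real m + 1 - la - la*x))"
  proof -
    have n1: "M - la * (1 + x) \<noteq> 0" and n2: "M - la \<noteq> 0" and n3: "M \<noteq> 0" using M lax la by auto
    have e1: "1/(1-p) = M / (M - la * (1 + x))" unfolding p_def using n1 n3 by (simp add: field_simps)
    have e2: "1/(1-q) = M / (M - la)" unfolding q_def using n2 n3 by (simp add: field_simps)
    have "1/(1-p) * (1/(1-q)) * (1 / M^2) = 1 / ((M - la) * (M - la * (1 + x)))"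
      unfolding e1 e2 using n1 n2 n3 by (simp add: power2_eq_square)
    also have "(M - la) * (M - la * (1 + x)) = (real m + 1 - la)*(real m + 1 - la - la*x)"
      unfolding M_def by (simp add: algebra_simps)
    finally show ?thesis .
  qed
  ultimately show ?thesis unfolding M_def by simp
qed

lemma R2:
  assumes x: "0 \<le> x" "x \<le> 1" and la: "0 < la" "la \<le> 1/4"
  shows "(\<lambda>s. la^s * (\<Sum>j\<le>s. (1+x)^j) * zeta_nat (s+2)) sums Sg (la*x) la"
proof -
  have t0: "0 \<le> la * x" using x la by simp
  have "la * x \<le> la * 1" using x la by (intro mult_left_mono) auto
  then have t1: "la * x \<le> 1/4" using la by linarith
  note AS = AA_sums_closed[OF t0 t1 la(1) la(2)]
  define f where "f = (\<lambda>m s. la^s * ((\<Sum>j\<le>s. (1+x)^j) * (1 / (real (Suc m))^(s+2))))"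
  have nn: "0 \<le> f m s" for m s unfolding f_def
    by (intro mult_nonneg_nonneg sum_nonneg zero_le_power divide_nonneg_nonneg) (use x la in auto)
  have row: "(\<lambda>s. f m s) sums (1/((real m + 1 - la)*(real m + 1 - la - la*x)))" for m
  proof -
    have "(\<lambda>s. f m s) = (\<lambda>s. la^s * ((\<Sum>j\<le>s. (1+x)^j) * (1 / (real m + 1)^(s+2))))"
      unfolding f_def by (simp add: add.commute)
    then show ?thesis using R1[OF x, of la m] la by simp
  qed
  note sw = nonneg_swap[where f = f, OF nn row AS(1)]
  have "(\<Sum>m. f m s) = la^s * (\<Sum>j\<le>s. (1+x)^j) * zeta_nat (s+2)" for s
  proof -
    have "(\<Sum>m. f m s) = (\<Sum>m. (la^s * (\<Sum>j\<le>s. (1+x)^j)) * (1 / (real (Suc m))^(s+2)))"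
      unfolding f_def by (simp add: mult.assoc)
    also have "\<dots> = (la^s * (\<Sum>j\<le>s. (1+x)^j)) * (\<Sum>m. 1 / (real (Suc m))^(s+2))"
      by (rule suminf_mult[OF zeta_summable]) simp
    finally show ?thesis unfolding zeta_nat_def .
  qed
  moreover have "(\<Sum>m. 1/((real m + 1 - la)*(real m + 1 - la - la*x))) = Sg (la*x) la"
    unfolding Sg_def by (simp add: algebra_simps)
  ultimately show ?thesis using sw(2) by simp
qed

lemma R3:
  assumes x: "0 \<le> x" "x \<le> 1" and la: "0 < la" "la \<le> 1/4"
  shows "(\<lambda>s. W s x * la^s) sums (1 + la + la^2 * (1 + x) * Sg (la*x) la)"
proof -
  define V where "V = (\<lambda>s. W s x * la^s)"
  have "(\<lambda>s. la^2 * (1 + x) * (la^s * (\<Sum>j\<le>s. (1+x)^j) * zeta_nat (s+2))) sums (la^2 * (1 + x) * Sg (la*x) la)"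
    by (rule sums_mult[OF R2[OF x la]])
  moreover have "V (Suc (Suc s)) = la^2 * (1 + x) * (la^s * (\<Sum>j\<le>s. (1+x)^j) * zeta_nat (s+2))" for s
    unfolding V_def by (simp add: power2_eq_square algebra_simps)
  ultimately have "(\<lambda>s. V (Suc (Suc s))) sums (la^2 * (1 + x) * Sg (la*x) la)" by simp
  then have "(\<lambda>s. V (Suc s)) sums (la^2 * (1 + x) * Sg (la*x) la + V (Suc 0))"
    by (rule sums_Suc_iff[where f = "\<lambda>s. V (Suc s)", THEN iffD1])
  then have "V sums (la^2 * (1 + x) * Sg (la*x) la + V (Suc 0) + V 0)"
    by (rule sums_Suc_iff[THEN iffD1])
  then show ?thesis unfolding V_def by (simp add: algebra_simps)
qed

lemma TR_series:
  assumes x: "0 \<le> x" "x \<le> 1" and la: "0 < la" "la \<le> 1/4"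
  shows "(\<lambda>s. TR s x * la^s) sums FF la x"
proof -
  have q: "\<bar>la * x\<bar> < 1"
  proof -
    have "la * x \<le> la * 1" using x la by (intro mult_left_mono) auto
    then have "la * x < 1" using la by linarith
    moreover have "la * x \<ge> 0" using x la by simp
    ultimately show ?thesis by simp
  qed
  have na: "summable (\<lambda>i. norm ((la * x)^i))" using q by (simp add: summable_geometric power_abs)
  have nb: "summable (\<lambda>s. norm (W s x * la^s))"
    using R3[OF x la] W_nonneg[OF x(1)] la by (simp add: sums_iff)
  have "(\<lambda>s. \<Sum>i\<le>s. (la * x)^i * (W (s - i) x * la^(s - i))) sums ((\<Sum>i. (la * x)^i) * (\<Sum>s. W s x * la^s))"
    by (rule Cauchy_product_sums[OF na nb])
  moreover have "(\<Sum>i\<le>s. (la * x)^i * (W (s - i) x * la^(s - i))) = TR s x * la^s" for s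
    unfolding TR_def sum_distrib_right
  proof (rule sum.cong[OF refl])
    fix i assume "i \<in> {..s}"
    then have "la^s = la^i * la^(s-i)" by (simp add: power_add[symmetric])
    then show "(la * x)^i * (W (s - i) x * la^(s - i)) = x^i * W (s - i) x * la^s"
      by (simp add: power_mult_distrib)
  qed
  moreover have "(\<Sum>i. (la * x)^i) * (\<Sum>s. W s x * la^s) = FF la x"
  proof -
    have "(\<Sum>i. (la * x)^i) = 1 / (1 - la * x)" using q by (simp add: suminf_geometric)
    moreover have "(\<Sum>s. W s x * la^s) = 1 + la + la^2 * (1 + x) * Sg (la*x) la"
      using R3[OF x la] by (simp add: sums_iff)
    ultimately show ?thesis unfolding FF_def by (simp add: power2_eq_square algebra_simps add_divide_distrib)
  qed
  ultimately show ?thesis by simp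
qed


definition cc :: "nat \<Rightarrow> nat \<Rightarrow> real" where
  "cc k l = (if l \<ge> 2 then
            (\<Sum>j=0..k. real ((k + l - j) choose (k + 1 - j)) * zeta_nat (k + l - j)) - zeta_nat l
          else if l = 1 then
            (\<Sum>j=0..<k. zeta_nat (k + 1 - j)) + 1
          else 1)"

lemma cc_Suc: "cc (Suc k) l = cc k l + real ((l + k + 1) choose (k + 2)) * zeta_nat (l + k + 1)"
proof -
  consider "l \<ge> 2" | "l = 1" | "l = 0" by linarith
  then show ?thesis
  proof cases
    case 1
    have "(\<Sum>j=0..Suc k. real ((Suc k + l - j) choose (Suc k + 1 - j)) * zeta_nat (Suc k + l - j))
      = real ((Suc k + l) choose (Suc k + 1)) * zeta_nat (Suc k + l)
        + (\<Sum>j=0..k. real ((Suc k + l - Suc j) choose (Suc k + 1 - Suc j)) * zeta_nat (Suc k + l - Suc j))"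
      by (subst sum.atLeast0_atMost_Suc_shift) simp
    also have "(\<Sum>j=0..k. real ((Suc k + l - Suc j) choose (Suc k + 1 - Suc j)) * zeta_nat (Suc k + l - Suc j))
       = (\<Sum>j=0..k. real ((k + l - j) choose (k + 1 - j)) * zeta_nat (k + l - j))"
      by (rule sum.cong) auto
    finally show ?thesis using 1 unfolding cc_def by (simp add: add_ac)
  next
    case 2
    have "(\<Sum>j=0..<Suc k. zeta_nat (Suc k + 1 - j)) = zeta_nat (Suc k + 1) + (\<Sum>j=0..<k. zeta_nat (Suc k + 1 - Suc j))"
      by (subst sum.atLeast0_lessThan_Suc_shift) simp
    also have "(\<Sum>j=0..<k. zeta_nat (Suc k + 1 - Suc j)) = (\<Sum>j=0..<k. zeta_nat (k + 1 - j))"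
      by (rule sum.cong) auto
    finally show ?thesis using 2 unfolding cc_def by (simp add: add_ac)
  next
    case 3
    have "(l + k + 1) choose (k + 2) = 0" using 3 by (intro binomial_eq_0) simp
    then show ?thesis using 3 unfolding cc_def by (simp only:) simp
  qed
qed

lemma polyQ: "(\<Sum>j\<le>b. (1+x)^(Suc j)) = real (Suc b) + (\<Sum>k\<le>Suc b. real (Suc (Suc b) choose (k+2)) * x^(Suc k))"
proof (induction b)
  case 0
  show ?case by (simp add: numeral_2_eq_2)
next
  case (Suc b)
  have bin: "(1+x)^(Suc (Suc b)) = 1 + (\<Sum>k\<le>Suc b. real (Suc (Suc b) choose (Suc k)) * x^(Suc k))"
  proof -
    have "(1+x)^(Suc (Suc b)) = (\<Sum>i\<le>Suc (Suc b). real (Suc (Suc b) choose i) * x^i * 1^(Suc (Suc b) - i))"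
      using binomial_ring[of x 1 "Suc (Suc b)"] by (simp add: add.commute)
    also have "\<dots> = 1 + (\<Sum>k\<le>Suc b. real (Suc (Suc b) choose (Suc k)) * x^(Suc k))"
      by (subst sum.atMost_Suc_shift) simp
    finally show ?thesis .
  qed
  have pas: "(\<Sum>k\<le>Suc (Suc b). real (Suc (Suc (Suc b)) choose (k+2)) * x^(Suc k))
      = (\<Sum>k\<le>Suc (Suc b). real (Suc (Suc b) choose (Suc k)) * x^(Suc k))
        + (\<Sum>k\<le>Suc (Suc b). real (Suc (Suc b) choose (k+2)) * x^(Suc k))"
    unfolding sum.distrib[symmetric] by (rule sum.cong) (auto simp: algebra_simps numeral_2_eq_2)
  have e1: "(\<Sum>k\<le>Suc (Suc b). real (Suc (Suc b) choose (Suc k)) * x^(Suc k))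
      = (\<Sum>k\<le>Suc b. real (Suc (Suc b) choose (Suc k)) * x^(Suc k))"
  proof -
    have z: "Suc (Suc b) choose (Suc (Suc (Suc b))) = 0" by (rule binomial_eq_0) simp
    show ?thesis by (subst sum.atMost_Suc) (simp only: z of_nat_0 mult_zero_left add_0_right)
  qed
  have e2: "(\<Sum>k\<le>Suc (Suc b). real (Suc (Suc b) choose (k+2)) * x^(Suc k))
      = (\<Sum>k\<le>Suc b. real (Suc (Suc b) choose (k+2)) * x^(Suc k))"
  proof -
    have z: "Suc (Suc b) choose (Suc (Suc b) + 2) = 0" by (rule binomial_eq_0) simp
    show ?thesis by (subst sum.atMost_Suc) (simp only: z of_nat_0 mult_zero_left add_0_right)
  qed
  have "(\<Sum>j\<le>Suc b. (1+x)^(Suc j)) = (\<Sum>j\<le>b. (1+x)^(Suc j)) + (1+x)^(Suc (Suc b))"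
    by simp
  also have "\<dots> = real (Suc b) + (\<Sum>k\<le>Suc b. real (Suc (Suc b) choose (k+2)) * x^(Suc k))
      + 1 + (\<Sum>k\<le>Suc b. real (Suc (Suc b) choose (Suc k)) * x^(Suc k))"
    unfolding Suc bin by simp
  also have "\<dots> = real (Suc (Suc b)) + (\<Sum>k\<le>Suc (Suc b). real (Suc (Suc (Suc b)) choose (k+2)) * x^(Suc k))"
    unfolding pas e1 e2 by simp
  finally show ?case .
qed

lemma cc_0: "cc 0 l = (if l \<ge> 2 then real (l - 1) * zeta_nat l else 1)"
  unfolding cc_def by (auto simp: algebra_simps of_nat_diff)

lemma W_eq: "W (Suc s) x = cc 0 (Suc s) + zeta_nat (Suc s) * (\<Sum>k\<le>s. real (Suc s choose (k+2)) * x^(Suc k))"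
proof (cases s)
  case 0
  then show ?thesis by (simp add: cc_0)
next
  case (Suc b)
  have "W (Suc s) x = (\<Sum>j\<le>b. (1+x)^(Suc j)) * zeta_nat (b + 2)"
    using Suc by (simp add: sum_distrib_left)
  also have "\<dots> = cc 0 (Suc s) + zeta_nat (Suc s) * (\<Sum>k\<le>s. real (Suc s choose (k+2)) * x^(Suc k))"
    unfolding polyQ using Suc by (simp add: cc_0 algebra_simps numeral_2_eq_2)
  finally show ?thesis .
qed

lemma TR_rec: "TR (Suc s) x = W (Suc s) x + x * TR s x"
proof -
  have "TR (Suc s) x = x^0 * W (Suc s - 0) x + (\<Sum>a\<le>s. x^(Suc a) * W (Suc s - Suc a) x)"
    unfolding TR_def by (subst sum.atMost_Suc_shift) simp
  also have "(\<Sum>a\<le>s. x^(Suc a) * W (Suc s - Suc a) x) = x * TR s x"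
    unfolding TR_def sum_distrib_left by (rule sum.cong) auto
  finally show ?thesis by simp
qed

lemma TR_cc: "TR s x = (\<Sum>k\<le>s. cc k (s - k) * x^k)"
proof (induction s)
  case 0
  show ?case by (simp add: TR_def cc_def)
next
  case (Suc s)
  have "(\<Sum>k\<le>Suc s. cc k (Suc s - k) * x^k) = cc 0 (Suc s) * x^0 + (\<Sum>k\<le>s. cc (Suc k) (Suc s - Suc k) * x^(Suc k))"
    by (subst sum.atMost_Suc_shift) simp
  also have "(\<Sum>k\<le>s. cc (Suc k) (Suc s - Suc k) * x^(Suc k))
      = (\<Sum>k\<le>s. x * (cc k (s - k) * x^k) + zeta_nat (Suc s) * (real (Suc s choose (k+2)) * x^(Suc k)))"
  proof (rule sum.cong[OF refl])
    fix k assume "k \<in> {..s}"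
    then have k: "k \<le> s" by simp
    then have e: "s - k + k + 1 = Suc s" by simp
    show "cc (Suc k) (Suc s - Suc k) * x^(Suc k) = x * (cc k (s - k) * x^k) + zeta_nat (Suc s) * (real (Suc s choose (k+2)) * x^(Suc k))"
      unfolding cc_Suc using e by (simp add: algebra_simps)
  qed
  also have "\<dots> = x * TR s x + zeta_nat (Suc s) * (\<Sum>k\<le>s. real (Suc s choose (k+2)) * x^(Suc k))"
    unfolding sum.distrib Suc sum_distrib_left ..
  finally show ?case unfolding TR_rec W_eq by simp
qed


lemma SS_cc: "SS k l = cc k l"
proof -
  define s where "s = k + l"
  have TLTR: "TL s x = TR s x" if x: "0 < x" "x < 1" for x
  proof (rule powser_unique[where d = "1/4" and F = "\<lambda>z. FF z x" and a = "\<lambda>s. TL s x" and b = "\<lambda>s. TR s x"])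
    show "(0::real) < 1/4" by simp
  next
    fix z :: real assume z: "0 < z" "z < 1/4"
    show "(\<lambda>s. TL s x * z^s) sums FF z x" by (rule LHS_series) (use x z in auto)
    show "(\<lambda>s. TR s x * z^s) sums FF z x" by (rule TR_series) (use x z in auto)
  qed
  have "SS k (s - k) = cc k (s - k)"
  proof (rule poly_unique[where s = s and p = "\<lambda>j. SS j (s - j)" and q = "\<lambda>j. cc j (s - j)"])
    fix x :: real assume "0 < x" "x < 1"
    then show "(\<Sum>j\<le>s. SS j (s - j) * x^j) = (\<Sum>j\<le>s. cc j (s - j) * x^j)"
      using TLTR[of x] unfolding TL_eq TR_cc by simp
  qed (simp add: s_def)
  then show ?thesis by (simp add: s_def)
qed

theorem theorem1:
  fixes k l :: nat
  shows "(\<lambda>n. Qpoly l (\<lambda>i. hnum i n) * Ppoly k (\<lambda>i. hnum i n)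
               / (real (n + 1) * real (n + 2)))
         sums
         (if l \<ge> 2 then
            (\<Sum>j=0..k. real ((k + l - j) choose (k + 1 - j)) * zeta_nat (k + l - j)) - zeta_nat l
          else if l = 1 then
            (\<Sum>j=0..<k. zeta_nat (k + 1 - j)) + 1
          else 1)"
proof -
  have e: "(\<lambda>n. Qpoly l (\<lambda>i. hnum i n) * Ppoly k (\<lambda>i. hnum i n) / (real (n + 1) * real (n + 2)))
      = (\<lambda>n. EE k n * HH l n / ((real n + 1) * (real n + 2)))"
    by (simp add: Ppoly_EE Qpoly_HH mult.commute add.commute)
  have "(\<lambda>n. EE k n * HH l n / ((real n + 1) * (real n + 2))) sums SS k l"
    unfolding SS_def by (rule summable_sums[OF SS_summable])
  then show ?thesis unfolding e SS_cc cc_def .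
qed


end
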